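(* Let $\mathsf{C}=\mathsf{C}_D\circ\cdots\circ\mathsf{C}_1$ be a depth-$D$ Clifford circuit. Then there is a circuit $\tilde{\mathsf{C}}=\tilde{\mathsf{C}}_{2D}\circ\cdots\circ\tilde{\mathsf{C}}_1$ of depth $2D$ such that: (i) each operation layer $\tilde{\mathsf{C}}_t$ with odd $t$ consists only of state preparations (of $|0\rangle$), single-qubit measurements and identities; (ii) each operation layer $\tilde{\mathsf{C}}_t$ with even $t$ consists only of one- and two-qubit unitaries. Moreover $\tilde{\mathsf{C}}\gtrsim\mathsf{C}$.
   Context: A Clifford circuit of depth $D$ on $n$ qubits is a composition of $D$ layers, each a tensor product of operations on disjoint qubit sets: preparation of $|0\rangle$, one- and two-qubit Clifford unitaries (including identity), single-qubit computational-basis measurements (and possibly classically controlled Paulis). Local stochastic Pauli noise of strength $p$: a random function $F$ from wires $[D]\times[n]$ to single-qubit Paulis with $\Pr[W\subseteq\mathrm{supp}(F)]\le p^{|W|}$ for all $W$; $F\bowtie\mathsf{C}$ applies $F(t,j)$ to qubit $j$ after layer $t$. $\tilde{\mathsf{C}}\gtrsim\mathsf{C}$ means: there are positive constants $\Lambda,\lambda$ such that for every $\tilde p\in[0,1]$ and every local stochastic Pauli noise $\tilde F$ of strength $\tilde p$ on $\tilde{\mathsf{C}}$ there is local stochastic Pauli noise $F$ of strength $\Lambda\tilde p^\lambda$ on $\mathsf{C}$ with $F\bowtie\mathsf{C}=\tilde F\bowtie\tilde{\mathsf{C}}$. *)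

theory Defs
  imports "HOL-Probability.Probability"
begin

text \<open>Convention: False = |0>, True = |1>. An n-qubit operator/density matrix is a
  function on bit lists of length n (entries outside are irrelevant).\<close>

type_synonym mat = "bool list \<Rightarrow> bool list \<Rightarrow> complex"
type_synonym cq = "bool list \<Rightarrow> mat"  \<comment> \<open>classical record \<Rightarrow> unnormalised density matrix\<close>

definition basis :: "nat \<Rightarrow> bool list set" where
  "basis n = {xs. length xs = n}"

definition conj_by :: "nat \<Rightarrow> mat \<Rightarrow> mat \<Rightarrow> mat" where
  "conj_by n M \<rho> = (\<lambda>x y. \<Sum>a\<in>basis n. \<Sum>b\<in>basis n. M x a * \<rho> a b * cnj (M y b))"

datatype pauli = PI | PX | PY | PZ

definition pmat :: "pauli \<Rightarrow> bool \<Rightarrow> bool \<Rightarrow> complex" where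
  "pmat P a b = (case P of
      PI \<Rightarrow> (if a = b then 1 else 0)
    | PX \<Rightarrow> (if a \<noteq> b then 1 else 0)
    | PY \<Rightarrow> (if a \<noteq> b then (if a then \<i> else - \<i>) else 0)
    | PZ \<Rightarrow> (if a = b then (if a then -1 else 1) else 0))"

definition pstr :: "pauli list \<Rightarrow> mat" where
  "pstr ps = (\<lambda>x y. \<Prod>i<length ps. pmat (ps!i) (x!i) (y!i))"

definition unitary_mat :: "nat \<Rightarrow> mat \<Rightarrow> bool" where
  "unitary_mat m U \<longleftrightarrow> (\<forall>x\<in>basis m. \<forall>y\<in>basis m.
      (\<Sum>k\<in>basis m. cnj (U k x) * U k y) = (if x = y then 1 else 0))"

definition clifford_mat :: "nat \<Rightarrow> mat \<Rightarrow> bool" where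
  "clifford_mat m U \<longleftrightarrow> unitary_mat m U \<and>
     (\<forall>ps. length ps = m \<longrightarrow> (\<exists>qs c. length qs = m \<and>
        (\<forall>x\<in>basis m. \<forall>y\<in>basis m. conj_by m U (pstr ps) x y = c * pstr qs x y)))"

definition lift :: "nat \<Rightarrow> nat list \<Rightarrow> mat \<Rightarrow> mat" where
  "lift n qs U = (\<lambda>x a. if (\<forall>i<n. i \<notin> set qs \<longrightarrow> x!i = a!i)
                        then U (map (\<lambda>i. x!i) qs) (map (\<lambda>i. a!i) qs) else 0)"

definition ket_bra :: "bool \<Rightarrow> bool \<Rightarrow> mat" where
  "ket_bra a b = (\<lambda>x y. if x = [a] \<and> y = [b] then 1 else 0)"

text \<open>Operations: preparation of |0> (reset), computational-basis measurement,
  a one- or two-qubit unitary gate on an ordered list of qubits, and a Pauli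
  on a qubit controlled by a classical function of the measurement record
  obtained before the current layer.\<close>
datatype op = Prep nat | Meas nat | Gate "nat list" mat | CPauli nat pauli "bool list \<Rightarrow> bool"

type_synonym layer = "op list"
type_synonym circuit = "layer list"   \<comment> \<open>first layer first; depth = length\<close>

fun op_qubits :: "op \<Rightarrow> nat list" where
  "op_qubits (Prep j) = [j]"
| "op_qubits (Meas j) = [j]"
| "op_qubits (Gate qs U) = qs"
| "op_qubits (CPauli j P c) = [j]"

fun wf_op :: "nat \<Rightarrow> op \<Rightarrow> bool" where
  "wf_op n (Gate qs U) = ((\<forall>q\<in>set qs. q < n) \<and> (length qs = 1 \<or> length qs = 2)
                          \<and> clifford_mat (length qs) U)"
| "wf_op n o' = (\<forall>q\<in>set (op_qubits o'). q < n)"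

definition wf_layer :: "nat \<Rightarrow> layer \<Rightarrow> bool" where
  "wf_layer n L \<longleftrightarrow> (\<forall>o'\<in>set L. wf_op n o') \<and> distinct (concat (map op_qubits L))"

definition clifford_circuit :: "nat \<Rightarrow> circuit \<Rightarrow> bool" where
  "clifford_circuit n C \<longleftrightarrow> (\<forall>L\<in>set C. wf_layer n L)"

fun is_unitary_op :: "op \<Rightarrow> bool" where
  "is_unitary_op (Gate qs U) = True"
| "is_unitary_op (CPauli j P c) = True"
| "is_unitary_op _ = False"

fun is_prep :: "op \<Rightarrow> bool" where
  "is_prep (Prep j) = True" | "is_prep _ = False"

fun is_meas :: "op \<Rightarrow> bool" where
  "is_meas (Meas j) = True" | "is_meas _ = False"

fun prep_meas_id_op :: "op \<Rightarrow> bool" where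
  "prep_meas_id_op (Prep j) = True"
| "prep_meas_id_op (Meas j) = True"
| "prep_meas_id_op (Gate qs U) = (length qs = 1 \<and>
      (\<forall>x\<in>basis 1. \<forall>y\<in>basis 1. U x y = (if x = y then 1 else 0)))"
| "prep_meas_id_op (CPauli j P c) = False"

definition prep_meas_layer :: "layer \<Rightarrow> bool" where
  "prep_meas_layer L \<longleftrightarrow> (\<forall>o'\<in>set L. prep_meas_id_op o')"

definition unitary_layer :: "layer \<Rightarrow> bool" where
  "unitary_layer L \<longleftrightarrow> (\<forall>o'\<in>set L. is_unitary_op o')"

definition apply_unitary :: "nat \<Rightarrow> mat \<Rightarrow> cq \<Rightarrow> cq" where
  "apply_unitary n M \<sigma> = (\<lambda>r. conj_by n M (\<sigma> r))"

definition apply_prep :: "nat \<Rightarrow> nat \<Rightarrow> cq \<Rightarrow> cq" where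
  "apply_prep n j \<sigma> = (\<lambda>r x y.
      conj_by n (lift n [j] (ket_bra False False)) (\<sigma> r) x y
    + conj_by n (lift n [j] (ket_bra False True)) (\<sigma> r) x y)"

text \<open>Measurement appends its outcome to the classical record.\<close>
definition apply_meas :: "nat \<Rightarrow> nat \<Rightarrow> cq \<Rightarrow> cq" where
  "apply_meas n j \<sigma> = (\<lambda>r. if r = [] then (\<lambda>x y. 0)
      else conj_by n (lift n [j] (ket_bra (last r) (last r))) (\<sigma> (butlast r)))"

fun apply_op :: "nat \<Rightarrow> op \<Rightarrow> cq \<Rightarrow> cq" where
  "apply_op n (Prep j) \<sigma> = apply_prep n j \<sigma>"
| "apply_op n (Meas j) \<sigma> = apply_meas n j \<sigma>"
| "apply_op n (Gate qs U) \<sigma> = apply_unitary n (lift n qs U) \<sigma>"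
| "apply_op n (CPauli j P c) \<sigma> =
     (\<lambda>r. if c r then conj_by n (lift n [j] (pstr [P])) (\<sigma> r) else \<sigma> r)"

text \<open>Operations of a layer act on disjoint qubits; unitaries (incl. classically
  controlled Paulis, which see only earlier layers' outcomes) are applied first,
  then preparations, then measurements (outcomes recorded in list order).\<close>
definition layer_sem :: "nat \<Rightarrow> layer \<Rightarrow> cq \<Rightarrow> cq" where
  "layer_sem n L = fold (apply_op n)
     (filter is_unitary_op L @ filter is_prep L @ filter is_meas L)"

type_synonym noise = "nat \<times> nat \<Rightarrow> pauli"  \<comment> \<open>wire (layer t, qubit j), 0-indexed\<close>

definition noise_layer :: "nat \<Rightarrow> noise \<Rightarrow> nat \<Rightarrow> cq \<Rightarrow> cq" where
  "noise_layer n f t = fold (\<lambda>j. apply_unitary n (lift n [j] (pstr [f (t, j)]))) [0..<n]"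

fun run :: "nat \<Rightarrow> circuit \<Rightarrow> noise \<Rightarrow> nat \<Rightarrow> cq \<Rightarrow> cq" where
  "run n [] f t \<sigma> = \<sigma>"
| "run n (L # Ls) f t \<sigma> = run n Ls f (Suc t) (noise_layer n f t (layer_sem n L \<sigma>))"

definition noisy_sem :: "nat \<Rightarrow> circuit \<Rightarrow> noise \<Rightarrow> mat \<Rightarrow> cq" where
  "noisy_sem n C f \<rho> = run n C f 0 (\<lambda>r. if r = [] then \<rho> else (\<lambda>x y. 0))"

definition supp :: "noise \<Rightarrow> (nat \<times> nat) set" where
  "supp f = {w. f w \<noteq> PI}"

definition local_stochastic :: "nat \<Rightarrow> nat \<Rightarrow> real \<Rightarrow> noise pmf \<Rightarrow> bool" where
  "local_stochastic D n p F \<longleftrightarrow>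
     (\<forall>W. W \<subseteq> {..<D} \<times> {..<n} \<longrightarrow> measure_pmf.prob F {f. W \<subseteq> supp f} \<le> p ^ card W)"

definition simulates :: "nat \<Rightarrow> circuit \<Rightarrow> circuit \<Rightarrow> bool" where
  "simulates n Ct C \<longleftrightarrow> (\<exists>\<Lambda>::real. \<exists>lam::real. \<Lambda> > 0 \<and> lam > 0 \<and>
     (\<forall>pt::real. 0 \<le> pt \<and> pt \<le> 1 \<longrightarrow> (\<forall>Ft. local_stochastic (length Ct) n pt Ft \<longrightarrow>
        (\<exists>F. local_stochastic (length C) n (\<Lambda> * pt powr lam) F \<and>
             map_pmf (noisy_sem n C) F = map_pmf (noisy_sem n Ct) Ft))))"

end

theory Submission
  imports Defs
begin

lemma basis_mem[simp]: "xs \<in> basis n \<longleftrightarrow> length xs = n"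
  by (simp add: basis_def)

lemma finite_basis[simp]: "finite (basis n)"
  unfolding basis_def using finite_lists_length_eq[of "UNIV::bool set" n] by simp

definition mm :: "nat \<Rightarrow> mat \<Rightarrow> mat \<Rightarrow> mat" where
  "mm n A B = (\<lambda>x y. \<Sum>a\<in>basis n. A x a * B a y)"

lemma conj_by_conj_by: "conj_by n A (conj_by n B \<rho>) = conj_by n (mm n A B) \<rho>"
proof (intro ext)
  fix x y
  have "conj_by n A (conj_by n B \<rho>) x y = (\<Sum>a\<in>basis n. \<Sum>b\<in>basis n. \<Sum>c\<in>basis n. \<Sum>d\<in>basis n.
      A x a * B a c * \<rho> c d * cnj (B b d) * cnj (A y b))"
    unfolding conj_by_def by (simp add: sum_distrib_left sum_distrib_right mult.assoc)
  also have "\<dots> = (\<Sum>a\<in>basis n. \<Sum>c\<in>basis n. \<Sum>b\<in>basis n. \<Sum>d\<in>basis n.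
      A x a * B a c * \<rho> c d * cnj (B b d) * cnj (A y b))"
    by (rule sum.cong[OF refl], rule sum.swap)
  also have "\<dots> = (\<Sum>c\<in>basis n. \<Sum>a\<in>basis n. \<Sum>b\<in>basis n. \<Sum>d\<in>basis n.
      A x a * B a c * \<rho> c d * cnj (B b d) * cnj (A y b))"
    by (rule sum.swap)
  also have "\<dots> = (\<Sum>c\<in>basis n. \<Sum>a\<in>basis n. \<Sum>d\<in>basis n. \<Sum>b\<in>basis n.
      A x a * B a c * \<rho> c d * cnj (B b d) * cnj (A y b))"
    by (rule sum.cong[OF refl], rule sum.cong[OF refl], rule sum.swap)
  also have "\<dots> = (\<Sum>c\<in>basis n. \<Sum>d\<in>basis n. \<Sum>a\<in>basis n. \<Sum>b\<in>basis n.
      A x a * B a c * \<rho> c d * cnj (B b d) * cnj (A y b))"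
    by (rule sum.cong[OF refl], rule sum.swap)
  also have "\<dots> = conj_by n (mm n A B) \<rho> x y"
    unfolding conj_by_def mm_def
    by (simp add: sum_distrib_left sum_distrib_right mult_ac)
  finally show "conj_by n A (conj_by n B \<rho>) x y = conj_by n (mm n A B) \<rho> x y" .
qed

lemma conj_by_cong_scalar:
  assumes "\<And>x a. a \<in> basis n \<Longrightarrow> A x a = s * B x a" and "s * cnj s = 1"
  shows "conj_by n A \<rho> = conj_by n B \<rho>"
proof (intro ext)
  fix x y
  have "conj_by n A \<rho> x y = (\<Sum>a\<in>basis n. \<Sum>b\<in>basis n. (s * cnj s) * (B x a * \<rho> a b * cnj (B y b)))"
    unfolding conj_by_def using assms(1) by (intro sum.cong refl) (simp add: mult.assoc mult.left_commute)
  then show "conj_by n A \<rho> x y = conj_by n B \<rho> x y" using assms(2) by (simp add: conj_by_def)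
qed

lemma conj_by_cong:
  assumes "\<And>x a. a \<in> basis n \<Longrightarrow> A x a = B x a"
  shows "conj_by n A \<rho> = conj_by n B \<rho>"
  using conj_by_cong_scalar[of n A 1 B] assms by simp

lemma conj_by_add: "conj_by n M (\<lambda>x y. \<rho>1 x y + \<rho>2 x y) = (\<lambda>x y. conj_by n M \<rho>1 x y + conj_by n M \<rho>2 x y)"
  unfolding conj_by_def by (simp add: sum.distrib distrib_left distrib_right)

lemma conj_by_zero: "conj_by n M (\<lambda>x y. 0) = (\<lambda>x y. 0)"
  unfolding conj_by_def by simp

fun idx :: "nat list \<Rightarrow> nat \<Rightarrow> nat" where
  "idx [] i = 0"
| "idx (q # qs) i = (if q = i then 0 else Suc (idx qs i))"

lemma idx_lt: "i \<in> set qs \<Longrightarrow> idx qs i < length qs"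
  by (induction qs) auto

lemma nth_idx: "i \<in> set qs \<Longrightarrow> qs ! idx qs i = i"
  by (induction qs) auto

lemma idx_nth: "distinct qs \<Longrightarrow> k < length qs \<Longrightarrow> idx qs (qs ! k) = k"
proof (induction qs arbitrary: k)
  case (Cons q qs)
  then show ?case by (cases k) auto
qed simp

definition ins :: "nat \<Rightarrow> bool list \<Rightarrow> nat list \<Rightarrow> bool list \<Rightarrow> bool list" where
  "ins n x qs b = map (\<lambda>i. if i \<in> set qs then b ! idx qs i else x ! i) [0..<n]"

lemma length_ins[simp]: "length (ins n x qs b) = n"
  by (simp add: ins_def)

lemma nth_ins: "i < n \<Longrightarrow> ins n x qs b ! i = (if i \<in> set qs then b ! idx qs i else x ! i)"
  by (simp add: ins_def)

lemma map_ins: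
  assumes "distinct qs" "\<forall>q\<in>set qs. q < n" "length b = length qs"
  shows "map ((!) (ins n x qs b)) qs = b"
proof (rule nth_equalityI)
  show "length (map ((!) (ins n x qs b)) qs) = length b" using assms by simp
  fix k assume "k < length (map ((!) (ins n x qs b)) qs)"
  then have k: "k < length qs" by simp
  then have "qs ! k < n" "qs ! k \<in> set qs" using assms by auto
  then show "map ((!) (ins n x qs b)) qs ! k = b ! k"
    using k assms by (simp add: nth_ins idx_nth)
qed

lemma ins_agree: "i < n \<Longrightarrow> i \<notin> set qs \<Longrightarrow> ins n x qs b ! i = x ! i"
  by (simp add: nth_ins)

lemma ins_eq:
  assumes "length a = n" "\<forall>i<n. i \<notin> set qs \<longrightarrow> x ! i = a ! i"
  shows "ins n x qs (map ((!) a) qs) = a"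
proof (rule nth_equalityI)
  fix i assume "i < length (ins n x qs (map ((!) a) qs))"
  then have i: "i < n" by simp
  show "ins n x qs (map ((!) a) qs) ! i = a ! i"
  proof (cases "i \<in> set qs")
    case True
    then show ?thesis using i by (simp add: nth_ins idx_lt nth_idx)
  next
    case False
    then show ?thesis using i assms by (simp add: nth_ins)
  qed
qed (simp add: assms)

lemma if_mult_zero: "(if P then A else 0) * (F::complex) = (if P then A * F else 0)"
  "(F::complex) * (if P then A else 0) = (if P then F * A else 0)" by simp_all

lemma sum_agree_ins:
  assumes "distinct qs" "\<forall>q\<in>set qs. q < n"
  shows "(\<Sum>a\<in>{a\<in>basis n. \<forall>i<n. i \<notin> set qs \<longrightarrow> x ! i = a ! i}. G a)
       = (\<Sum>b\<in>basis (length qs). G (ins n x qs b))"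
proof -
  have eq: "{a\<in>basis n. \<forall>i<n. i \<notin> set qs \<longrightarrow> x ! i = a ! i} = ins n x qs ` basis (length qs)"
  proof
    show "{a\<in>basis n. \<forall>i<n. i \<notin> set qs \<longrightarrow> x ! i = a ! i} \<subseteq> ins n x qs ` basis (length qs)"
    proof
      fix a assume "a \<in> {a\<in>basis n. \<forall>i<n. i \<notin> set qs \<longrightarrow> x ! i = a ! i}"
      then have "length a = n" "\<forall>i<n. i \<notin> set qs \<longrightarrow> x ! i = a ! i" by simp_all
      then have "a = ins n x qs (map ((!) a) qs)" by (intro ins_eq[symmetric])
      then show "a \<in> ins n x qs ` basis (length qs)" by (rule image_eqI[where x="map ((!) a) qs"]) simp
    qed
    show "ins n x qs ` basis (length qs) \<subseteq> {a\<in>basis n. \<forall>i<n. i \<notin> set qs \<longrightarrow> x ! i = a ! i}"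
    proof
      fix a assume "a \<in> ins n x qs ` basis (length qs)"
      then obtain b where "a = ins n x qs b" by blast
      then show "a \<in> {a\<in>basis n. \<forall>i<n. i \<notin> set qs \<longrightarrow> x ! i = a ! i}"
        by (simp add: ins_agree)
    qed
  qed
  have inj: "inj_on (ins n x qs) (basis (length qs))"
  proof (rule inj_onI)
    fix b1 b2 assume "b1 \<in> basis (length qs)" "b2 \<in> basis (length qs)" "ins n x qs b1 = ins n x qs b2"
    then have "length b1 = length qs" "length b2 = length qs" "ins n x qs b1 = ins n x qs b2" by simp_all
    then show "b1 = b2" using map_ins[OF assms, of b1 x] map_ins[OF assms, of b2 x] by metis
  qed
  show ?thesis unfolding eq by (simp add: sum.reindex[OF inj])
qed

lemma sum_lift_left:
  assumes "distinct qs" "\<forall>q\<in>set qs. q < n"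
  shows "(\<Sum>a\<in>basis n. lift n qs U x a * F a)
       = (\<Sum>b\<in>basis (length qs). U (map ((!) x) qs) b * F (ins n x qs b))"
proof -
  have "(\<Sum>a\<in>basis n. lift n qs U x a * F a)
      = (\<Sum>a\<in>basis n. if (\<forall>i<n. i \<notin> set qs \<longrightarrow> x ! i = a ! i) then U (map ((!) x) qs) (map ((!) a) qs) * F a else 0)"
    by (simp only: lift_def if_mult_zero)
  also have "\<dots> = (\<Sum>a\<in>{a\<in>basis n. \<forall>i<n. i \<notin> set qs \<longrightarrow> x ! i = a ! i}. U (map ((!) x) qs) (map ((!) a) qs) * F a)"
    by (simp only: sum.inter_filter[OF finite_basis])
  also have "\<dots> = (\<Sum>b\<in>basis (length qs). U (map ((!) x) qs) (map ((!) (ins n x qs b)) qs) * F (ins n x qs b))"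
    by (rule sum_agree_ins[OF assms, where x=x and G="\<lambda>a. U (map ((!) x) qs) (map ((!) a) qs) * F a"])
  also have "\<dots> = (\<Sum>b\<in>basis (length qs). U (map ((!) x) qs) b * F (ins n x qs b))"
    using map_ins[OF assms] by (intro sum.cong refl) simp
  finally show ?thesis .
qed

lemma sum_lift_right:
  assumes "distinct qs" "\<forall>q\<in>set qs. q < n"
  shows "(\<Sum>a\<in>basis n. F a * lift n qs U a y)
       = (\<Sum>b\<in>basis (length qs). F (ins n y qs b) * U b (map ((!) y) qs))"
proof -
  have "(\<Sum>a\<in>basis n. F a * lift n qs U a y)
      = (\<Sum>a\<in>basis n. if (\<forall>i<n. i \<notin> set qs \<longrightarrow> a ! i = y ! i) then F a * U (map ((!) a) qs) (map ((!) y) qs) else 0)"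
    by (simp only: lift_def if_mult_zero)
  also have "\<dots> = (\<Sum>a\<in>{a\<in>basis n. \<forall>i<n. i \<notin> set qs \<longrightarrow> a ! i = y ! i}. F a * U (map ((!) a) qs) (map ((!) y) qs))"
    by (simp only: sum.inter_filter[OF finite_basis])
  also have "\<dots> = (\<Sum>a\<in>{a\<in>basis n. \<forall>i<n. i \<notin> set qs \<longrightarrow> y ! i = a ! i}. F a * U (map ((!) a) qs) (map ((!) y) qs))"
  proof -
    have "\<And>a. (\<forall>i<n. i \<notin> set qs \<longrightarrow> (a::bool list) ! i = y ! i) = (\<forall>i<n. i \<notin> set qs \<longrightarrow> y ! i = a ! i)"
      by (metis (no_types))
    then show ?thesis by (simp only:)
  qed
  also have "\<dots> = (\<Sum>b\<in>basis (length qs). F (ins n y qs b) * U (map ((!) (ins n y qs b)) qs) (map ((!) y) qs))"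
    by (rule sum_agree_ins[OF assms, where x=y and G="\<lambda>a. F a * U (map ((!) a) qs) (map ((!) y) qs)"])
  also have "\<dots> = (\<Sum>b\<in>basis (length qs). F (ins n y qs b) * U b (map ((!) y) qs))"
    using map_ins[OF assms] by (intro sum.cong refl) simp
  finally show ?thesis .
qed


lemma prod_set_nth:
  assumes "distinct qs"
  shows "(\<Prod>i\<in>set qs. h i) = (\<Prod>k<length qs. h (qs ! k))"
proof -
  have inj: "inj_on (nth qs) {..<length qs}" using assms by (simp add: inj_on_nth)
  have im: "nth qs ` {..<length qs} = set qs" by (auto simp: set_conv_nth)
  show ?thesis using prod.reindex[OF inj, of h] im by simp
qed

lemma prod_split_qs:
  fixes qs :: "nat list"
  assumes "distinct qs" "\<forall>q\<in>set qs. q < n"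
  shows "(\<Prod>i<n. h i) = (\<Prod>i\<in>{..<n} - set qs. h i) * (\<Prod>k<length qs. h (qs ! k))"
proof -
  have "set qs \<subseteq> {..<n}" using assms by auto
  then have "(\<Prod>i<n. h i) = (\<Prod>i\<in>{..<n} - set qs. h i) * (\<Prod>i\<in>set qs. h i)"
    by (rule prod.subset_diff) simp
  then show ?thesis by (simp only: prod_set_nth[OF assms(1), of h])
qed

definition PS :: "nat \<Rightarrow> (nat \<Rightarrow> pauli) \<Rightarrow> mat" where
  "PS n e = (\<lambda>x y. \<Prod>i<n. pmat (e i) (x ! i) (y ! i))"

definition off :: "nat \<Rightarrow> nat list \<Rightarrow> (nat \<Rightarrow> pauli) \<Rightarrow> bool list \<Rightarrow> bool list \<Rightarrow> complex" where
  "off n qs e x y = (\<Prod>i\<in>{..<n} - set qs. pmat (e i) (x ! i) (y ! i))"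

lemma PS_ins_left:
  assumes "distinct qs" "\<forall>q\<in>set qs. q < n" "length b = length qs"
  shows "PS n e (ins n x qs b) y = off n qs e x y * pstr (map e qs) b (map ((!) y) qs)"
proof -
  have "PS n e (ins n x qs b) y = (\<Prod>i\<in>{..<n} - set qs. pmat (e i) (ins n x qs b ! i) (y ! i)) *
       (\<Prod>k<length qs. pmat (e (qs ! k)) (ins n x qs b ! (qs ! k)) (y ! (qs ! k)))"
    unfolding PS_def by (rule prod_split_qs[OF assms(1,2)])
  also have "(\<Prod>i\<in>{..<n} - set qs. pmat (e i) (ins n x qs b ! i) (y ! i)) = off n qs e x y"
    unfolding off_def by (intro prod.cong refl) (simp add: ins_agree)
  also have "(\<Prod>k<length qs. pmat (e (qs ! k)) (ins n x qs b ! (qs ! k)) (y ! (qs ! k)))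
      = pstr (map e qs) b (map ((!) y) qs)"
  proof -
    have "\<And>k. k < length qs \<Longrightarrow> ins n x qs b ! (qs ! k) = b ! k"
      using map_ins[OF assms] by (metis nth_map)
    then show ?thesis unfolding pstr_def by (intro prod.cong) simp_all
  qed
  finally show ?thesis .
qed

lemma PS_ins_right:
  assumes "distinct qs" "\<forall>q\<in>set qs. q < n" "length b = length qs"
  shows "PS n e x (ins n y qs b) = off n qs e x y * pstr (map e qs) (map ((!) x) qs) b"
proof -
  have "PS n e x (ins n y qs b) = (\<Prod>i\<in>{..<n} - set qs. pmat (e i) (x ! i) (ins n y qs b ! i)) *
       (\<Prod>k<length qs. pmat (e (qs ! k)) (x ! (qs ! k)) (ins n y qs b ! (qs ! k)))"
    unfolding PS_def by (rule prod_split_qs[OF assms(1,2)])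
  also have "(\<Prod>i\<in>{..<n} - set qs. pmat (e i) (x ! i) (ins n y qs b ! i)) = off n qs e x y"
    unfolding off_def by (intro prod.cong refl) (simp add: ins_agree)
  also have "(\<Prod>k<length qs. pmat (e (qs ! k)) (x ! (qs ! k)) (ins n y qs b ! (qs ! k)))
      = pstr (map e qs) (map ((!) x) qs) b"
  proof -
    have "\<And>k. k < length qs \<Longrightarrow> ins n y qs b ! (qs ! k) = b ! k"
      using map_ins[OF assms] by (metis nth_map)
    then show ?thesis unfolding pstr_def by (intro prod.cong) simp_all
  qed
  finally show ?thesis .
qed

lemma lift_PS:
  assumes "distinct qs" "\<forall>q\<in>set qs. q < n"
  shows "mm n (lift n qs U) (PS n e) x y =
     off n qs e x y * mm (length qs) U (pstr (map e qs)) (map ((!) x) qs) (map ((!) y) qs)"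
proof -
  have "mm n (lift n qs U) (PS n e) x y = (\<Sum>b\<in>basis (length qs). U (map ((!) x) qs) b * PS n e (ins n x qs b) y)"
    unfolding mm_def by (rule sum_lift_left[OF assms])
  also have "\<dots> = (\<Sum>b\<in>basis (length qs). off n qs e x y * (U (map ((!) x) qs) b * pstr (map e qs) b (map ((!) y) qs)))"
    by (intro sum.cong refl) (simp add: PS_ins_left[OF assms])
  finally show ?thesis by (simp add: mm_def sum_distrib_left)
qed

lemma PS_lift:
  assumes "distinct qs" "\<forall>q\<in>set qs. q < n"
  shows "mm n (PS n e) (lift n qs U) x y =
     off n qs e x y * mm (length qs) (pstr (map e qs)) U (map ((!) x) qs) (map ((!) y) qs)"
proof -
  have "mm n (PS n e) (lift n qs U) x y = (\<Sum>b\<in>basis (length qs). PS n e x (ins n y qs b) * U b (map ((!) y) qs))"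
    unfolding mm_def by (rule sum_lift_right[OF assms])
  also have "\<dots> = (\<Sum>b\<in>basis (length qs). off n qs e x y * (pstr (map e qs) (map ((!) x) qs) b * U b (map ((!) y) qs)))"
    by (intro sum.cong refl) (simp add: PS_ins_right[OF assms])
  finally show ?thesis by (simp add: mm_def sum_distrib_left)
qed


lemma basis_Suc: "basis (Suc n) = Cons False ` basis n \<union> Cons True ` basis n"
proof
  show "basis (Suc n) \<subseteq> Cons False ` basis n \<union> Cons True ` basis n"
  proof
    fix x assume "x \<in> basis (Suc n)"
    then obtain b xs where "x = b # xs" "length xs = n" by (cases x) auto
    then show "x \<in> Cons False ` basis n \<union> Cons True ` basis n" by (cases b) auto
  qed
qed auto

lemma sum_basis_prod:
  "(\<Sum>a\<in>basis n. \<Prod>i<n. f i (a ! i)) = (\<Prod>i<n. (f i False + f i True :: complex))"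
proof (induction n arbitrary: f)
  case 0
  have "basis 0 = {[]}" by (auto simp: basis_def)
  then show ?case by simp
next
  case (Suc n)
  have disj: "Cons False ` basis n \<inter> Cons True ` basis n = {}" by auto
  have "(\<Sum>a\<in>basis (Suc n). \<Prod>i<Suc n. f i (a ! i))
     = (\<Sum>a\<in>Cons False ` basis n. \<Prod>i<Suc n. f i (a ! i)) + (\<Sum>a\<in>Cons True ` basis n. \<Prod>i<Suc n. f i (a ! i))"
    unfolding basis_Suc by (rule sum.union_disjoint) (simp_all add: disj)
  also have "\<dots> = (\<Sum>a\<in>basis n. f 0 False * (\<Prod>i<n. f (Suc i) (a ! i))) + (\<Sum>a\<in>basis n. f 0 True * (\<Prod>i<n. f (Suc i) (a ! i)))"
    by (simp add: sum.reindex prod.lessThan_Suc_shift del: prod.lessThan_Suc)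
  also have "\<dots> = (f 0 False + f 0 True) * (\<Prod>i<n. f (Suc i) False + f (Suc i) True)"
    by (simp add: sum_distrib_left[symmetric] Suc.IH[of "\<lambda>i. f (Suc i)"] distrib_right)
  also have "\<dots> = (\<Prod>i<Suc n. f i False + f i True)"
    by (simp only: prod.lessThan_Suc_shift)
  finally show ?case .
qed

lemma prod_indicator:
  assumes "finite A"
  shows "(\<Prod>i\<in>A. if P i then 1 else (0::complex)) = (if \<forall>i\<in>A. P i then 1 else 0)"
  using assms by (induction A rule: finite_induct) auto

fun pm :: "pauli \<Rightarrow> pauli \<Rightarrow> pauli" where
  "pm PI q = q"
| "pm p PI = p"
| "pm PX PX = PI" | "pm PY PY = PI" | "pm PZ PZ = PI"
| "pm PX PY = PZ" | "pm PY PX = PZ"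
| "pm PY PZ = PX" | "pm PZ PY = PX"
| "pm PX PZ = PY" | "pm PZ PX = PY"

fun ph :: "pauli \<Rightarrow> pauli \<Rightarrow> complex" where
  "ph PX PY = \<i>" | "ph PY PX = - \<i>"
| "ph PY PZ = \<i>" | "ph PZ PY = - \<i>"
| "ph PZ PX = \<i>" | "ph PX PZ = - \<i>"
| "ph _ _ = 1"

lemma pmat_mult:
  "pmat P a False * pmat Q False c + pmat P a True * pmat Q True c = ph P Q * pmat (pm P Q) a c"
  by (cases P; cases Q; cases a; cases c) (simp_all add: pmat_def)

lemma ph_unit: "ph P Q * cnj (ph P Q) = 1"
  by (cases P; cases Q) simp_all

lemma pm_comm: "pm P Q = pm Q P"
  by (cases P; cases Q) simp_all

lemma pmat_unit: "cnj (pmat P False u) * pmat P False v + cnj (pmat P True u) * pmat P True v = (if u = v then 1 else 0)"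
  by (cases P; cases u; cases v) (simp_all add: pmat_def)

lemma prod_unit: "(\<And>i. i \<in> A \<Longrightarrow> s i * cnj (s i) = 1) \<Longrightarrow> prod s A * cnj (prod s A) = (1::complex)"
  by (simp add: prod.distrib[symmetric])

lemma PS_mult:
  "mm n (PS n e1) (PS n e2) x y = (\<Prod>i<n. ph (e1 i) (e2 i)) * PS n (\<lambda>i. pm (e1 i) (e2 i)) x y"
proof -
  have "mm n (PS n e1) (PS n e2) x y = (\<Sum>a\<in>basis n. \<Prod>i<n. pmat (e1 i) (x ! i) (a ! i) * pmat (e2 i) (a ! i) (y ! i))"
    unfolding mm_def PS_def by (simp add: prod.distrib)
  also have "\<dots> = (\<Prod>i<n. pmat (e1 i) (x ! i) False * pmat (e2 i) False (y ! i) + pmat (e1 i) (x ! i) True * pmat (e2 i) True (y ! i))"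
    by (rule sum_basis_prod)
  also have "\<dots> = (\<Prod>i<n. ph (e1 i) (e2 i) * pmat (pm (e1 i) (e2 i)) (x ! i) (y ! i))"
    by (simp add: pmat_mult)
  finally show ?thesis by (simp add: PS_def prod.distrib)
qed

lemma lift1_PS:
  assumes "j < n"
  shows "lift n [j] (pstr [p]) = PS n (\<lambda>i. if i = j then p else PI)"
proof (intro ext)
  fix x a
  have "PS n (\<lambda>i. if i = j then p else PI) x a =
     (\<Prod>i\<in>{..<n} - set [j]. pmat (if i = j then p else PI) (x ! i) (a ! i)) *
     (\<Prod>k<length [j]. pmat (if [j] ! k = j then p else PI) (x ! ([j] ! k)) (a ! ([j] ! k)))"
    unfolding PS_def by (rule prod_split_qs) (use assms in auto)
  also have "(\<Prod>i\<in>{..<n} - set [j]. pmat (if i = j then p else PI) (x ! i) (a ! i))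
     = (\<Prod>i\<in>{..<n} - set [j]. if x ! i = a ! i then 1 else 0)"
    by (intro prod.cong refl) (auto simp: pmat_def)
  also have "\<dots> = (if \<forall>i\<in>{..<n} - set [j]. x ! i = a ! i then 1 else 0)"
    by (rule prod_indicator) simp
  finally have "PS n (\<lambda>i. if i = j then p else PI) x a = (if \<forall>i\<in>{..<n} - set [j]. x ! i = a ! i then 1 else 0) * pmat p (x ! j) (a ! j)"
    by simp
  moreover have "lift n [j] (pstr [p]) x a = (if \<forall>i<n. i \<notin> set [j] \<longrightarrow> x ! i = a ! i then pmat p (x ! j) (a ! j) else 0)"
    by (simp add: lift_def pstr_def cong: if_cong split del: if_split)
  moreover have cond: "(\<forall>i\<in>{..<n} - set [j]. x ! i = a ! i) = (\<forall>i<n. i \<notin> set [j] \<longrightarrow> x ! i = a ! i)"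
    by blast
  ultimately show "lift n [j] (pstr [p]) x a = PS n (\<lambda>i. if i = j then p else PI) x a"
    by (simp only: cond if_mult_zero mult_1_left)
qed


lemma sum_delta_mult: "finite A \<Longrightarrow> a \<in> A \<Longrightarrow> (\<Sum>b\<in>A. f b * (if a = b then 1 else (0::complex))) = f a"
  by (simp add: if_distrib[of "\<lambda>z. f _ * z"] sum.delta cong: if_cong)

lemma unitary_mm:
  assumes A: "unitary_mat m A" and B: "unitary_mat m B"
  shows "unitary_mat m (mm m A B)"
  unfolding unitary_mat_def
proof (intro ballI)
  fix x y assume x: "x \<in> basis m" and y: "y \<in> basis m"
  have "(\<Sum>k\<in>basis m. cnj (mm m A B k x) * mm m A B k y)
      = (\<Sum>k\<in>basis m. \<Sum>a\<in>basis m. \<Sum>b\<in>basis m. (cnj (B a x) * B b y) * (cnj (A k a) * A k b))"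
    by (simp add: mm_def sum_distrib_left sum_distrib_right mult_ac)
  also have "\<dots> = (\<Sum>a\<in>basis m. \<Sum>k\<in>basis m. \<Sum>b\<in>basis m. (cnj (B a x) * B b y) * (cnj (A k a) * A k b))"
    by (rule sum.swap)
  also have "\<dots> = (\<Sum>a\<in>basis m. \<Sum>b\<in>basis m. \<Sum>k\<in>basis m. (cnj (B a x) * B b y) * (cnj (A k a) * A k b))"
    by (rule sum.cong[OF refl], rule sum.swap)
  also have "\<dots> = (\<Sum>a\<in>basis m. \<Sum>b\<in>basis m. (cnj (B a x) * B b y) * (\<Sum>k\<in>basis m. cnj (A k a) * A k b))"
    by (simp add: sum_distrib_left)
  also have "\<dots> = (\<Sum>a\<in>basis m. \<Sum>b\<in>basis m. (cnj (B a x) * B b y) * (if a = b then 1 else 0))"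
    using A unfolding unitary_mat_def by (intro sum.cong refl) simp
  also have "\<dots> = (\<Sum>a\<in>basis m. cnj (B a x) * B a y)"
    by (intro sum.cong refl) (simp add: sum_delta_mult)
  also have "\<dots> = (if x = y then 1 else 0)"
    using B x y unfolding unitary_mat_def by simp
  finally show "(\<Sum>k\<in>basis m. cnj (mm m A B k x) * mm m A B k y) = (if x = y then 1 else 0)" .
qed

lemma pstr_unitary:
  assumes "length ps = m"
  shows "unitary_mat m (pstr ps)"
  unfolding unitary_mat_def
proof (intro ballI)
  fix x y assume x: "x \<in> basis m" and y: "y \<in> basis m"
  have "(\<Sum>k\<in>basis m. cnj (pstr ps k x) * pstr ps k y)
      = (\<Sum>k\<in>basis m. \<Prod>i<m. cnj (pmat (ps ! i) (k ! i) (x ! i)) * pmat (ps ! i) (k ! i) (y ! i))"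
    using assms by (simp add: pstr_def prod.distrib)
  also have "\<dots> = (\<Prod>i<m. cnj (pmat (ps ! i) False (x ! i)) * pmat (ps ! i) False (y ! i)
                    + cnj (pmat (ps ! i) True (x ! i)) * pmat (ps ! i) True (y ! i))"
    by (rule sum_basis_prod)
  also have "\<dots> = (\<Prod>i<m. if x ! i = y ! i then 1 else 0)"
    by (simp only: pmat_unit)
  also have "\<dots> = (if \<forall>i\<in>{..<m}. x ! i = y ! i then 1 else 0)"
    by (rule prod_indicator) simp
  also have "\<dots> = (if x = y then 1 else 0)"
  proof -
    have "(\<forall>i\<in>{..<m}. x ! i = y ! i) = (x = y)"
      using x y by (auto simp: list_eq_iff_nth_eq)
    then show ?thesis by (simp only:)
  qed
  finally show "(\<Sum>k\<in>basis m. cnj (pstr ps k x) * pstr ps k y) = (if x = y then 1 else 0)" .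
qed

lemma clifford_push:
  assumes cl: "clifford_mat m U" and len: "length ps = m"
  shows "\<exists>qs c. length qs = m \<and> c * cnj c = 1 \<and>
     (\<forall>x\<in>basis m. \<forall>z\<in>basis m. mm m U (pstr ps) x z = c * mm m (pstr qs) U x z)"
proof -
  have U: "unitary_mat m U" using cl by (simp add: clifford_mat_def)
  obtain qs c where lq: "length qs = m"
    and H: "\<forall>x\<in>basis m. \<forall>y\<in>basis m. conj_by m U (pstr ps) x y = c * pstr qs x y"
    using cl len unfolding clifford_mat_def by blast
  have C1: "mm m U (pstr ps) x z = (\<Sum>y\<in>basis m. conj_by m U (pstr ps) x y * U y z)"
    if z: "z \<in> basis m" for x z
  proof -
    have "(\<Sum>y\<in>basis m. conj_by m U (pstr ps) x y * U y z)
        = (\<Sum>y\<in>basis m. \<Sum>a\<in>basis m. \<Sum>b\<in>basis m. (U x a * pstr ps a b) * (cnj (U y b) * U y z))"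
      by (simp add: conj_by_def sum_distrib_left sum_distrib_right mult_ac)
    also have "\<dots> = (\<Sum>a\<in>basis m. \<Sum>y\<in>basis m. \<Sum>b\<in>basis m. (U x a * pstr ps a b) * (cnj (U y b) * U y z))"
      by (rule sum.swap)
    also have "\<dots> = (\<Sum>a\<in>basis m. \<Sum>b\<in>basis m. \<Sum>y\<in>basis m. (U x a * pstr ps a b) * (cnj (U y b) * U y z))"
      by (rule sum.cong[OF refl], rule sum.swap)
    also have "\<dots> = (\<Sum>a\<in>basis m. \<Sum>b\<in>basis m. (U x a * pstr ps a b) * (\<Sum>y\<in>basis m. cnj (U y b) * U y z))"
      by (simp add: sum_distrib_left)
    also have "\<dots> = (\<Sum>a\<in>basis m. \<Sum>b\<in>basis m. (U x a * pstr ps a z) * (if z = b then 1 else 0))"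
      using U z unfolding unitary_mat_def by (intro sum.cong refl) auto
    also have "\<dots> = (\<Sum>a\<in>basis m. U x a * pstr ps a z)"
      using z by (intro sum.cong refl) (simp add: sum_delta_mult)
    finally show ?thesis by (simp add: mm_def)
  qed
  have C2: "mm m U (pstr ps) x z = c * mm m (pstr qs) U x z" if x: "x \<in> basis m" and z: "z \<in> basis m" for x z
  proof -
    have "mm m U (pstr ps) x z = (\<Sum>y\<in>basis m. c * pstr qs x y * U y z)"
      using C1[OF z] H x by simp
    then show ?thesis by (simp add: mm_def sum_distrib_left mult_ac)
  qed
  have z0: "replicate m False \<in> basis m" by simp
  have W: "unitary_mat m (mm m U (pstr ps))" by (rule unitary_mm[OF U pstr_unitary[OF len]])
  have V: "unitary_mat m (mm m (pstr qs) U)" by (rule unitary_mm[OF pstr_unitary[OF lq] U])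
  let ?z = "replicate m False"
  have "1 = (\<Sum>x\<in>basis m. cnj (mm m U (pstr ps) x ?z) * mm m U (pstr ps) x ?z)"
    using W z0 unfolding unitary_mat_def by simp
  also have "\<dots> = (\<Sum>x\<in>basis m. (c * cnj c) * (cnj (mm m (pstr qs) U x ?z) * mm m (pstr qs) U x ?z))"
    using C2 z0 by (intro sum.cong refl) (simp add: mult_ac)
  also have "\<dots> = c * cnj c"
    using V z0 unfolding unitary_mat_def by (simp add: sum_distrib_left[symmetric])
  finally have "c * cnj c = 1" by simp
  then show ?thesis using lq C2 by blast
qed


lemma ins_cond:
  fixes x y :: "bool list"
  assumes dq: "distinct qs" and q: "\<forall>q\<in>set qs. q < n" and dj: "set qs \<inter> set rs = {}"
    and lb: "length b = length qs"
  shows "(\<forall>i<n. i \<notin> set rs \<longrightarrow> ins n x qs b ! i = y ! i) \<longleftrightarrow>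
         (b = map ((!) y) qs \<and> (\<forall>i<n. i \<notin> set qs \<and> i \<notin> set rs \<longrightarrow> x ! i = y ! i))"
proof
  assume H: "\<forall>i<n. i \<notin> set rs \<longrightarrow> ins n x qs b ! i = y ! i"
  have "b = map ((!) y) qs"
  proof (rule nth_equalityI)
    show "length b = length (map ((!) y) qs)" using lb by simp
    fix k assume k: "k < length b"
    then have k': "k < length qs" using lb by simp
    then have "qs ! k \<in> set qs" by simp
    then have "qs ! k < n" "qs ! k \<notin> set rs" using q dj by auto
    then have "ins n x qs b ! (qs ! k) = y ! (qs ! k)" using H by blast
    moreover have "ins n x qs b ! (qs ! k) = b ! k" using map_ins[OF dq q lb] k' by (metis nth_map)
    ultimately show "b ! k = map ((!) y) qs ! k" using k' by simp
  qed
  moreover have "\<forall>i<n. i \<notin> set qs \<and> i \<notin> set rs \<longrightarrow> x ! i = y ! i"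
  proof (intro allI impI)
    fix i assume i: "i < n" "i \<notin> set qs \<and> i \<notin> set rs"
    then have "ins n x qs b ! i = y ! i" using H by blast
    then show "x ! i = y ! i" using i by (simp add: ins_agree)
  qed
  ultimately show "b = map ((!) y) qs \<and> (\<forall>i<n. i \<notin> set qs \<and> i \<notin> set rs \<longrightarrow> x ! i = y ! i)" by blast
next
  assume H: "b = map ((!) y) qs \<and> (\<forall>i<n. i \<notin> set qs \<and> i \<notin> set rs \<longrightarrow> x ! i = y ! i)"
  show "\<forall>i<n. i \<notin> set rs \<longrightarrow> ins n x qs b ! i = y ! i"
  proof (intro allI impI)
    fix i assume i: "i < n" "i \<notin> set rs"
    show "ins n x qs b ! i = y ! i"
    proof (cases "i \<in> set qs")
      case True
      then have "ins n x qs b ! i = b ! idx qs i" using i by (simp add: nth_ins)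
      also have "\<dots> = y ! (qs ! idx qs i)" using H True idx_lt[OF True] by simp
      also have "\<dots> = y ! i" using True by (simp add: nth_idx)
      finally show ?thesis .
    next
      case False
      then show ?thesis using H i by (simp add: ins_agree)
    qed
  qed
qed

lemma sum_if_collapse:
  assumes "m \<in> A" "finite A"
  shows "(\<Sum>b\<in>A. f b * (if b = m \<and> Q then g else 0)) = (if Q then f m * g else (0::complex))"
proof (cases Q)
  case True
  then show ?thesis using assms by (simp add: if_distrib[of "\<lambda>z. f _ * z"] sum.delta' cong: if_cong)
qed simp

lemma lift_lift:
  fixes x y :: "bool list"
  assumes dq: "distinct qs" and q: "\<forall>q\<in>set qs. q < n"
    and r: "\<forall>q\<in>set rs. q < n" and dj: "set qs \<inter> set rs = {}"
  shows "mm n (lift n qs A) (lift n rs B) x y =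
     (if (\<forall>i<n. i \<notin> set qs \<and> i \<notin> set rs \<longrightarrow> x ! i = y ! i)
      then A (map ((!) x) qs) (map ((!) y) qs) * B (map ((!) x) rs) (map ((!) y) rs) else 0)"
proof -
  let ?Q = "\<forall>i<n. i \<notin> set qs \<and> i \<notin> set rs \<longrightarrow> x ! i = y ! i"
  have mr: "map ((!) (ins n x qs b)) rs = map ((!) x) rs" for b
  proof -
    have "ins n x qs b ! i = x ! i" if i: "i \<in> set rs" for i
    proof -
      have "i < n" "i \<notin> set qs" using r dj i by auto
      then show ?thesis by (rule ins_agree)
    qed
    then show ?thesis by simp
  qed
  have "mm n (lift n qs A) (lift n rs B) x y =
      (\<Sum>b\<in>basis (length qs). A (map ((!) x) qs) b * lift n rs B (ins n x qs b) y)"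
    unfolding mm_def by (rule sum_lift_left[OF dq q])
  also have "\<dots> = (\<Sum>b\<in>basis (length qs). A (map ((!) x) qs) b *
       (if b = map ((!) y) qs \<and> ?Q then B (map ((!) x) rs) (map ((!) y) rs) else 0))"
  proof (rule sum.cong[OF refl])
    fix b assume b: "b \<in> basis (length qs)"
    have "lift n rs B (ins n x qs b) y = (if (\<forall>i<n. i \<notin> set rs \<longrightarrow> ins n x qs b ! i = y ! i)
        then B (map ((!) (ins n x qs b)) rs) (map ((!) y) rs) else 0)"
      by (simp only: lift_def)
    also have "\<dots> = (if b = map ((!) y) qs \<and> ?Q then B (map ((!) x) rs) (map ((!) y) rs) else 0)"
      using ins_cond[OF dq q dj, of b x y] b by (simp only: mr basis_mem)
    finally show "A (map ((!) x) qs) b * lift n rs B (ins n x qs b) y = A (map ((!) x) qs) b *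
       (if b = map ((!) y) qs \<and> ?Q then B (map ((!) x) rs) (map ((!) y) rs) else 0)" by (simp only:)
  qed
  also have "\<dots> = (if ?Q then A (map ((!) x) qs) (map ((!) y) qs) * B (map ((!) x) rs) (map ((!) y) rs) else 0)"
    by (rule sum_if_collapse) simp_all
  finally show ?thesis .
qed

lemma lift_comm:
  assumes "distinct qs" "\<forall>q\<in>set qs. q < n" "distinct rs" "\<forall>q\<in>set rs. q < n" "set qs \<inter> set rs = {}"
  shows "mm n (lift n qs A) (lift n rs B) = mm n (lift n rs B) (lift n qs A)"
proof (intro ext)
  fix x y :: "bool list"
  have dj: "set rs \<inter> set qs = {}" using assms(5) by blast
  have c: "(\<forall>i<n. i \<notin> set qs \<and> i \<notin> set rs \<longrightarrow> x ! i = y ! i) = (\<forall>i<n. i \<notin> set rs \<and> i \<notin> set qs \<longrightarrow> x ! i = y ! i)"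
    by blast
  show "mm n (lift n qs A) (lift n rs B) x y = mm n (lift n rs B) (lift n qs A) x y"
    unfolding lift_lift[OF assms(1,2,4,5)] lift_lift[OF assms(3,4,2) dj] c by (simp only: mult.commute)
qed

lemma AU_AU: "apply_unitary n A (apply_unitary n B \<sigma>) = apply_unitary n (mm n A B) \<sigma>"
  by (simp add: apply_unitary_def conj_by_conj_by)

lemma conj_comm:
  assumes "mm n A B = mm n B A"
  shows "conj_by n A (conj_by n B \<rho>) = conj_by n B (conj_by n A \<rho>)"
  by (simp add: conj_by_conj_by assms)


fun modc :: "nat \<Rightarrow> op \<Rightarrow> op" where
  "modc k (CPauli j P c) = CPauli j P (\<lambda>r. c (take (length r - k) r))"
| "modc k (Gate qs U) = Gate qs U"
| "modc k (Prep j) = Prep j"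
| "modc k (Meas j) = Meas j"

lemma op_qubits_modc[simp]: "op_qubits (modc k u) = op_qubits u"
  by (cases u) auto

lemma is_unitary_modc[simp]: "is_unitary_op (modc k u) = is_unitary_op u"
  by (cases u) auto

lemma is_prep_modc[simp]: "is_prep (modc k u) = is_prep u"
  by (cases u) auto

lemma is_meas_modc[simp]: "is_meas (modc k u) = is_meas u"
  by (cases u) auto

lemma wf_op_modc[simp]: "wf_op n (modc k u) = wf_op n u"
  by (cases u) auto

lemma apply_modc0: "apply_op n (modc 0 u) = apply_op n u"
  by (cases u) auto

fun uop :: "op \<Rightarrow> mat" where
  "uop (Gate qs U) = U"
| "uop (CPauli j P c) = pstr [P]"
| "uop _ = (\<lambda>x y. 0)"

definition umat :: "nat \<Rightarrow> op \<Rightarrow> mat" where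
  "umat n u = lift n (op_qubits u) (uop u)"

lemma umat_comm:
  assumes "distinct (op_qubits u)" "\<forall>q\<in>set (op_qubits u). q < n" "j < n" "j \<notin> set (op_qubits u)"
  shows "conj_by n (umat n u) (conj_by n (lift n [j] K) \<rho>) = conj_by n (lift n [j] K) (conj_by n (umat n u) \<rho>)"
proof (rule conj_comm)
  show "mm n (umat n u) (lift n [j] K) = mm n (lift n [j] K) (umat n u)"
    unfolding umat_def by (rule lift_comm) (use assms in auto)
qed

lemma lift_comm1:
  assumes "distinct qs" "\<forall>q\<in>set qs. q < n" "j < n" "j \<notin> set qs"
  shows "conj_by n (lift n qs U) (conj_by n (lift n [j] K) \<rho>) = conj_by n (lift n [j] K) (conj_by n (lift n qs U) \<rho>)"
proof (rule conj_comm)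
  show "mm n (lift n qs U) (lift n [j] K) = mm n (lift n [j] K) (lift n qs U)"
    by (rule lift_comm) (use assms in auto)
qed

lemma prep_comm_gate:
  assumes "distinct qs" "\<forall>q\<in>set qs. q < n" "j < n" "j \<notin> set qs"
  shows "apply_op n (Gate qs U) (apply_prep n j \<sigma>) = apply_prep n j (apply_op n (Gate qs U) \<sigma>)"
  using lift_comm1[OF assms] by (simp add: apply_prep_def apply_unitary_def conj_by_add)

lemma prep_comm_cp:
  assumes "j' < n" "j < n" "j \<noteq> j'"
  shows "apply_op n (CPauli j' P cc) (apply_prep n j \<sigma>) = apply_prep n j (apply_op n (CPauli j' P cc) \<sigma>)"
proof (rule ext)
  fix r
  have c: "conj_by n (lift n [j'] (pstr [P])) (conj_by n (lift n [j] K) \<rho>) = conj_by n (lift n [j] K) (conj_by n (lift n [j'] (pstr [P])) \<rho>)" for K \<rho>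
    by (rule lift_comm1) (use assms in auto)
  show "apply_op n (CPauli j' P cc) (apply_prep n j \<sigma>) r = apply_prep n j (apply_op n (CPauli j' P cc) \<sigma>) r"
    by (cases "cc r") (simp_all add: apply_prep_def conj_by_add c)
qed

lemma meas_comm_gate:
  assumes "distinct qs" "\<forall>q\<in>set qs. q < n" "j < n" "j \<notin> set qs"
  shows "apply_op n (Gate qs U) (apply_meas n j \<sigma>) = apply_meas n j (apply_op n (Gate qs U) \<sigma>)"
proof (rule ext)
  fix r
  show "apply_op n (Gate qs U) (apply_meas n j \<sigma>) r = apply_meas n j (apply_op n (Gate qs U) \<sigma>) r"
    using lift_comm1[OF assms] by (cases "r = []") (simp_all add: apply_meas_def apply_unitary_def conj_by_zero)
qed

lemma meas_comm_cp:
  assumes "j' < n" "j < n" "j \<noteq> j'"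
  shows "apply_op n (CPauli j' P (\<lambda>r. cc (take (length r - Suc k) r))) (apply_meas n j \<sigma>)
       = apply_meas n j (apply_op n (CPauli j' P (\<lambda>r. cc (take (length r - k) r))) \<sigma>)"
proof (rule ext)
  fix r :: "bool list"
  have c: "conj_by n (lift n [j'] (pstr [P])) (conj_by n (lift n [j] K) \<rho>) = conj_by n (lift n [j] K) (conj_by n (lift n [j'] (pstr [P])) \<rho>)" for K \<rho>
    by (rule lift_comm1) (use assms in auto)
  show "apply_op n (CPauli j' P (\<lambda>r. cc (take (length r - Suc k) r))) (apply_meas n j \<sigma>) r
       = apply_meas n j (apply_op n (CPauli j' P (\<lambda>r. cc (take (length r - k) r))) \<sigma>) r"
  proof (cases "r = []")
    case True
    then show ?thesis by (simp add: apply_meas_def conj_by_zero)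
  next
    case False
    have "length r - Suc k < length r" using False by simp
    then have tk: "take (length r - Suc k) (butlast r) = take (length r - Suc k) r"
      by (simp add: take_butlast)
    show ?thesis using False by (simp add: apply_meas_def c tk)
  qed
qed

lemma prep_comm:
  assumes u: "is_unitary_op u" "distinct (op_qubits u)" "\<forall>q\<in>set (op_qubits u). q < n"
    and j: "j < n" "j \<notin> set (op_qubits u)"
  shows "apply_op n u (apply_prep n j \<sigma>) = apply_prep n j (apply_op n u \<sigma>)"
proof (cases u)
  case (Gate qs U)
  then show ?thesis using prep_comm_gate[of qs n j U \<sigma>] u j by simp
next
  case (CPauli j' P cc)
  then show ?thesis using prep_comm_cp[of j' n j P cc \<sigma>] u j by simp
qed (use u in auto)

lemma meas_comm:
  assumes u: "is_unitary_op u" "distinct (op_qubits u)" "\<forall>q\<in>set (op_qubits u). q < n"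
    and j: "j < n" "j \<notin> set (op_qubits u)"
  shows "apply_op n (modc (Suc k) u) (apply_meas n j \<sigma>) = apply_meas n j (apply_op n (modc k u) \<sigma>)"
proof (cases u)
  case (Gate qs U)
  then show ?thesis using meas_comm_gate[of qs n j U \<sigma>] u j by simp
next
  case (CPauli j' P cc)
  then show ?thesis using meas_comm_cp[of j' n j P cc k \<sigma>] u j by simp
qed (use u in auto)


lemma fold_prep_comm:
  assumes u: "is_unitary_op u" "distinct (op_qubits u)" "\<forall>q\<in>set (op_qubits u). q < n"
    and Ps: "\<forall>p\<in>set Ps. is_prep p \<and> wf_op n p \<and> set (op_qubits p) \<inter> set (op_qubits u) = {}"
  shows "apply_op n u (fold (apply_op n) Ps \<sigma>) = fold (apply_op n) Ps (apply_op n u \<sigma>)"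
  using Ps
proof (induction Ps arbitrary: \<sigma>)
  case (Cons p Ps)
  obtain j where p: "p = Prep j" using Cons.prems by (cases p) auto
  have j: "j < n" "j \<notin> set (op_qubits u)" using Cons.prems p by auto
  have "apply_op n u (fold (apply_op n) (p # Ps) \<sigma>) = fold (apply_op n) Ps (apply_op n u (apply_op n p \<sigma>))"
    using Cons by simp
  also have "apply_op n u (apply_op n p \<sigma>) = apply_op n p (apply_op n u \<sigma>)"
    using prep_comm[OF u j] p by simp
  finally show ?case by simp
qed simp

lemma fold_meas_comm:
  assumes u: "is_unitary_op u" "distinct (op_qubits u)" "\<forall>q\<in>set (op_qubits u). q < n"
    and Ms: "\<forall>p\<in>set Ms. is_meas p \<and> wf_op n p \<and> set (op_qubits p) \<inter> set (op_qubits u) = {}"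
  shows "apply_op n (modc (length Ms) u) (fold (apply_op n) Ms \<sigma>) = fold (apply_op n) Ms (apply_op n u \<sigma>)"
  using Ms
proof (induction Ms rule: rev_induct)
  case Nil
  then show ?case by (simp add: apply_modc0)
next
  case (snoc m Ms)
  obtain j where m: "m = Meas j" using snoc.prems by (cases m) auto
  have j: "j < n" "j \<notin> set (op_qubits u)" using snoc.prems m by auto
  have "apply_op n (modc (length (Ms @ [m])) u) (fold (apply_op n) (Ms @ [m]) \<sigma>)
      = apply_op n (modc (Suc (length Ms)) u) (apply_meas n j (fold (apply_op n) Ms \<sigma>))"
    using m by simp
  also have "\<dots> = apply_meas n j (apply_op n (modc (length Ms) u) (fold (apply_op n) Ms \<sigma>))"
    by (rule meas_comm[OF u j])
  also have "\<dots> = apply_meas n j (fold (apply_op n) Ms (apply_op n u \<sigma>))"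
    using snoc by simp
  finally show ?case using m by simp
qed

lemma layer_reorder:
  assumes Us: "\<forall>u\<in>set Us. is_unitary_op u \<and> distinct (op_qubits u) \<and> (\<forall>q\<in>set (op_qubits u). q < n)"
    and Ps: "\<forall>u\<in>set Us. \<forall>p\<in>set Ps. is_prep p \<and> wf_op n p \<and> set (op_qubits p) \<inter> set (op_qubits u) = {}"
    and Ms: "\<forall>u\<in>set Us. \<forall>p\<in>set Ms. is_meas p \<and> wf_op n p \<and> set (op_qubits p) \<inter> set (op_qubits u) = {}"
  shows "fold (apply_op n) (map (modc (length Ms)) Us) (fold (apply_op n) Ms (fold (apply_op n) Ps \<sigma>))
       = fold (apply_op n) Ms (fold (apply_op n) Ps (fold (apply_op n) Us \<sigma>))"
  using Us Ps Ms
proof (induction Us arbitrary: \<sigma>)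
  case (Cons u Us)
  have u: "is_unitary_op u" "distinct (op_qubits u)" "\<forall>q\<in>set (op_qubits u). q < n" using Cons.prems by auto
  have "fold (apply_op n) (map (modc (length Ms)) (u # Us)) (fold (apply_op n) Ms (fold (apply_op n) Ps \<sigma>))
      = fold (apply_op n) (map (modc (length Ms)) Us) (apply_op n (modc (length Ms) u) (fold (apply_op n) Ms (fold (apply_op n) Ps \<sigma>)))"
    by simp
  also have "apply_op n (modc (length Ms) u) (fold (apply_op n) Ms (fold (apply_op n) Ps \<sigma>))
      = fold (apply_op n) Ms (apply_op n u (fold (apply_op n) Ps \<sigma>))"
    by (rule fold_meas_comm[OF u]) (use Cons.prems in auto)
  also have "apply_op n u (fold (apply_op n) Ps \<sigma>) = fold (apply_op n) Ps (apply_op n u \<sigma>)"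
    by (rule fold_prep_comm[OF u]) (use Cons.prems in auto)
  also have "fold (apply_op n) (map (modc (length Ms)) Us) (fold (apply_op n) Ms (fold (apply_op n) Ps (apply_op n u \<sigma>)))
      = fold (apply_op n) Ms (fold (apply_op n) Ps (fold (apply_op n) Us (apply_op n u \<sigma>)))"
    using Cons by simp
  finally show ?case by simp
qed simp


definition cimg :: "mat \<Rightarrow> pauli list \<Rightarrow> pauli list" where
  "cimg U ps = (if \<forall>p\<in>set ps. p = PI then ps else
     (SOME qs. length qs = length ps \<and> (\<exists>c. c * cnj c = 1 \<and>
        (\<forall>x\<in>basis (length ps). \<forall>z\<in>basis (length ps).
           mm (length ps) U (pstr ps) x z = c * mm (length ps) (pstr qs) U x z))))"

lemma pstr_allI:
  assumes "\<forall>p\<in>set ps. p = PI" "length x = length ps" "length z = length ps"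
  shows "pstr ps x z = (if x = z then 1 else 0)"
proof -
  have "pstr ps x z = (\<Prod>i<length ps. if x ! i = z ! i then 1 else 0)"
  proof -
    have "\<And>i. i < length ps \<Longrightarrow> ps ! i = PI" using assms(1) nth_mem by blast
    then show ?thesis unfolding pstr_def by (intro prod.cong refl) (simp add: pmat_def)
  qed
  also have "\<dots> = (if \<forall>i\<in>{..<length ps}. x ! i = z ! i then 1 else 0)"
    by (rule prod_indicator) simp
  also have "(\<forall>i\<in>{..<length ps}. x ! i = z ! i) = (x = z)"
    using assms(2,3) by (auto simp: list_eq_iff_nth_eq)
  finally show ?thesis .
qed

lemma cimg_prop:
  assumes cl: "clifford_mat (length ps) U"
  shows "length (cimg U ps) = length ps \<and> (\<exists>c. c * cnj c = 1 \<and>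
        (\<forall>x\<in>basis (length ps). \<forall>z\<in>basis (length ps).
           mm (length ps) U (pstr ps) x z = c * mm (length ps) (pstr (cimg U ps)) U x z))"
proof (cases "\<forall>p\<in>set ps. p = PI")
  case True
  have "mm (length ps) U (pstr ps) x z = mm (length ps) (pstr ps) U x z"
    if "x \<in> basis (length ps)" "z \<in> basis (length ps)" for x z
  proof -
    have "mm (length ps) U (pstr ps) x z = (\<Sum>a\<in>basis (length ps). U x a * (if z = a then 1 else 0))"
      unfolding mm_def using True that by (intro sum.cong refl) (auto simp: pstr_allI)
    also have "\<dots> = U x z" using that by (simp add: sum_delta_mult)
    also have "\<dots> = (\<Sum>a\<in>basis (length ps). U a z * (if x = a then 1 else 0))"
      using that by (simp add: sum_delta_mult)
    also have "\<dots> = mm (length ps) (pstr ps) U x z"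
      unfolding mm_def using True that by (intro sum.cong refl) (auto simp: pstr_allI)
    finally show ?thesis .
  qed
  then show ?thesis using True unfolding cimg_def by (intro conjI exI[of _ 1]) auto
next
  case False
  have ex: "\<exists>qs. length qs = length ps \<and> (\<exists>c. c * cnj c = 1 \<and>
        (\<forall>x\<in>basis (length ps). \<forall>z\<in>basis (length ps).
           mm (length ps) U (pstr ps) x z = c * mm (length ps) (pstr qs) U x z))"
    using clifford_push[OF cl refl] by blast
  show ?thesis unfolding cimg_def if_not_P[OF False] by (rule someI_ex[OF ex])
qed

fun propg :: "op \<Rightarrow> (nat \<Rightarrow> pauli) \<Rightarrow> (nat \<Rightarrow> pauli)" where
  "propg (Gate qs U) e = (\<lambda>i. if i \<in> set qs then cimg U (map e qs) ! idx qs i else e i)"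
| "propg _ e = e"

lemma prop_modc[simp]: "propg (modc k u) = propg u"
  by (cases u) auto

lemma pm_PI[simp]: "pm P PI = P" "pm PI P = P"
  by (cases P; simp)+

lemma PS_cong: "(\<And>i. i < n \<Longrightarrow> e i = e' i) \<Longrightarrow> PS n e = PS n e'"
  unfolding PS_def by (intro ext prod.cong) auto

lemma gate_push:
  assumes dq: "distinct qs" and q: "\<forall>q\<in>set qs. q < n" and cl: "clifford_mat (length qs) U"
  shows "apply_op n (Gate qs U) (apply_unitary n (PS n e) \<sigma>)
       = apply_unitary n (PS n (propg (Gate qs U) e)) (apply_op n (Gate qs U) \<sigma>)"
proof -
  let ?ps = "map e qs"
  let ?e' = "propg (Gate qs U) e"
  have clp: "clifford_mat (length ?ps) U" using cl by simp
  obtain c where c1: "c * cnj c = 1" and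
    cc: "\<forall>x\<in>basis (length qs). \<forall>z\<in>basis (length qs). mm (length qs) U (pstr ?ps) x z = c * mm (length qs) (pstr (cimg U ?ps)) U x z"
    and lc: "length (cimg U ?ps) = length qs"
    using cimg_prop[OF clp] by auto
  have me: "map ?e' qs = cimg U ?ps"
  proof (rule nth_equalityI)
    show "length (map ?e' qs) = length (cimg U ?ps)" using lc by simp
    fix k assume "k < length (map ?e' qs)"
    then have k: "k < length qs" by simp
    then show "map ?e' qs ! k = cimg U ?ps ! k" using dq by (simp add: idx_nth)
  qed
  have off: "off n qs ?e' x y = off n qs e x y" for x y
    unfolding off_def by (intro prod.cong refl) auto
  have M: "mm n (lift n qs U) (PS n e) x y = c * mm n (PS n ?e') (lift n qs U) x y" for x y
  proof -
    have "mm n (lift n qs U) (PS n e) x y = off n qs e x y * mm (length qs) U (pstr ?ps) (map ((!) x) qs) (map ((!) y) qs)"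
      by (rule lift_PS[OF dq q])
    also have "\<dots> = off n qs e x y * (c * mm (length qs) (pstr (map ?e' qs)) U (map ((!) x) qs) (map ((!) y) qs))"
      using cc me by simp
    also have "\<dots> = c * (off n qs ?e' x y * mm (length qs) (pstr (map ?e' qs)) U (map ((!) x) qs) (map ((!) y) qs))"
      unfolding off by (simp only: mult.left_commute)
    also have "\<dots> = c * mm n (PS n ?e') (lift n qs U) x y"
      by (simp add: PS_lift[OF dq q])
    finally show ?thesis .
  qed
  have "apply_op n (Gate qs U) (apply_unitary n (PS n e) \<sigma>) = apply_unitary n (mm n (lift n qs U) (PS n e)) \<sigma>"
    by (simp add: AU_AU)
  also have "\<dots> = apply_unitary n (mm n (PS n ?e') (lift n qs U)) \<sigma>"
    unfolding apply_unitary_def using conj_by_cong_scalar[OF M c1] by simp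
  also have "\<dots> = apply_unitary n (PS n ?e') (apply_op n (Gate qs U) \<sigma>)"
    by (simp add: AU_AU)
  finally show ?thesis .
qed

lemma cp_push:
  assumes j: "j < n"
  shows "apply_op n (CPauli j P cc) (apply_unitary n (PS n e) \<sigma>)
       = apply_unitary n (PS n e) (apply_op n (CPauli j P cc) \<sigma>)"
proof -
  let ?d = "\<lambda>i. if i = j then P else PI"
  let ?p1 = "\<Prod>i<n. ph (?d i) (e i)"
  let ?p2 = "\<Prod>i<n. ph (e i) (?d i)"
  have u2: "?p2 * cnj ?p2 = 1" by (rule prod_unit) (rule ph_unit)
  have u1: "?p1 * cnj ?p1 = 1" by (rule prod_unit) (rule ph_unit)
  have M: "mm n (lift n [j] (pstr [P])) (PS n e) x y = (?p1 * cnj ?p2) * mm n (PS n e) (lift n [j] (pstr [P])) x y" for x y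
  proof -
    have A: "mm n (lift n [j] (pstr [P])) (PS n e) x y = ?p1 * PS n (\<lambda>i. pm (?d i) (e i)) x y"
      unfolding lift1_PS[OF j] by (rule PS_mult)
    have B: "mm n (PS n e) (lift n [j] (pstr [P])) x y = ?p2 * PS n (\<lambda>i. pm (e i) (?d i)) x y"
      unfolding lift1_PS[OF j] by (rule PS_mult)
    have C: "PS n (\<lambda>i. pm (e i) (?d i)) = PS n (\<lambda>i. pm (?d i) (e i))"
      by (simp add: pm_comm)
    have E: "(?p1 * cnj ?p2) * (?p2 * X) = ?p1 * X" for X
    proof -
      have "(?p1 * cnj ?p2) * (?p2 * X) = ?p1 * (?p2 * cnj ?p2) * X" by (simp only: mult_ac)
      then show ?thesis by (simp only: u2 mult_1_right)
    qed
    show ?thesis unfolding A B C E ..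
  qed
  have "(?p1 * cnj ?p2) * cnj (?p1 * cnj ?p2) = (?p1 * cnj ?p1) * (?p2 * cnj ?p2)"
    by (simp only: complex_cnj_mult complex_cnj_cnj mult_ac)
  then have s: "(?p1 * cnj ?p2) * cnj (?p1 * cnj ?p2) = 1"
    by (simp only: u1 u2 mult_1_right)
  have C: "conj_by n (lift n [j] (pstr [P])) (conj_by n (PS n e) \<rho>) = conj_by n (PS n e) (conj_by n (lift n [j] (pstr [P])) \<rho>)" for \<rho>
    by (simp add: conj_by_conj_by conj_by_cong_scalar[OF M s])
  show ?thesis
    by (rule ext) (simp add: apply_unitary_def C)
qed

lemma fold_push:
  assumes "\<forall>u\<in>set Us. is_unitary_op u \<and> wf_op n u \<and> distinct (op_qubits u)"
  shows "fold (apply_op n) Us (apply_unitary n (PS n e) \<sigma>)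
       = apply_unitary n (PS n (fold propg Us e)) (fold (apply_op n) Us \<sigma>)"
  using assms
proof (induction Us arbitrary: e \<sigma>)
  case (Cons u Us)
  have "apply_op n u (apply_unitary n (PS n e) \<sigma>) = apply_unitary n (PS n (propg u e)) (apply_op n u \<sigma>)"
  proof (cases u)
    case (Gate qs U)
    then show ?thesis using Cons.prems gate_push[of qs n U e \<sigma>] by auto
  next
    case (CPauli j P cc)
    then show ?thesis using Cons.prems cp_push[of j n P cc e \<sigma>] by auto
  qed (use Cons.prems in auto)
  then show ?case using Cons by simp
qed simp

lemma PS_PS:
  "apply_unitary n (PS n e1) (apply_unitary n (PS n e2) \<sigma>) = apply_unitary n (PS n (\<lambda>i. pm (e1 i) (e2 i))) \<sigma>"
proof -
  have M: "mm n (PS n e1) (PS n e2) x y = (\<Prod>i<n. ph (e1 i) (e2 i)) * PS n (\<lambda>i. pm (e1 i) (e2 i)) x y" for x y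
    by (rule PS_mult)
  have s: "(\<Prod>i<n. ph (e1 i) (e2 i)) * cnj (\<Prod>i<n. ph (e1 i) (e2 i)) = 1" by (rule prod_unit) (rule ph_unit)
  show ?thesis unfolding AU_AU unfolding apply_unitary_def using conj_by_cong_scalar[OF M s] by simp
qed

lemma noise_PS_aux:
  "Suc k \<le> n \<Longrightarrow> fold (\<lambda>j. apply_unitary n (lift n [j] (pstr [f (t, j)]))) [0..<Suc k] \<sigma>
     = apply_unitary n (PS n (\<lambda>i. if i < Suc k then f (t, i) else PI)) \<sigma>"
proof (induction k)
  case 0
  have "lift n [0] (pstr [f (t, 0)]) = PS n (\<lambda>i. if i < Suc 0 then f (t, i) else PI)"
    using 0 by (simp add: lift1_PS cong: if_cong)
  then show ?case by simp
next
  case (Suc k)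
  have j: "Suc k < n" using Suc.prems by simp
  have "fold (\<lambda>j. apply_unitary n (lift n [j] (pstr [f (t, j)]))) [0..<Suc (Suc k)] \<sigma>
      = apply_unitary n (PS n (\<lambda>i. if i = Suc k then f (t, Suc k) else PI))
          (apply_unitary n (PS n (\<lambda>i. if i < Suc k then f (t, i) else PI)) \<sigma>)"
    using Suc j by (simp add: lift1_PS)
  also have "\<dots> = apply_unitary n (PS n (\<lambda>i. pm (if i = Suc k then f (t, Suc k) else PI) (if i < Suc k then f (t, i) else PI))) \<sigma>"
    by (rule PS_PS)
  also have "(\<lambda>i. pm (if i = Suc k then f (t, Suc k) else PI) (if i < Suc k then f (t, i) else PI))
      = (\<lambda>i. if i < Suc (Suc k) then f (t, i) else PI)"
  proof
    fix i show "pm (if i = Suc k then f (t, Suc k) else PI) (if i < Suc k then f (t, i) else PI)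
      = (if i < Suc (Suc k) then f (t, i) else PI)"
      by (cases "i < Suc k"; cases "i = Suc k") auto
  qed
  finally show ?case .
qed

lemma noise_PS:
  assumes "0 < n"
  shows "noise_layer n f t \<sigma> = apply_unitary n (PS n (\<lambda>j. f (t, j))) \<sigma>"
proof -
  obtain k where k: "n = Suc k" using assms by (cases n) auto
  have "noise_layer n f t \<sigma> = apply_unitary n (PS n (\<lambda>i. if i < Suc k then f (t, i) else PI)) \<sigma>"
    unfolding noise_layer_def using noise_PS_aux[of k n f t \<sigma>] k by simp
  also have "PS n (\<lambda>i. if i < Suc k then f (t, i) else PI) = PS n (\<lambda>j. f (t, j))"
    using k by (intro PS_cong) simp
  finally show ?thesis .
qed


definition PML :: "layer \<Rightarrow> layer" where
  "PML L = filter (\<lambda>o'. is_prep o' \<or> is_meas o') L"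

definition UL :: "layer \<Rightarrow> layer" where
  "UL L = map (modc (length (filter is_meas L))) (filter is_unitary_op L)"

fun tr :: "circuit \<Rightarrow> circuit" where
  "tr [] = []"
| "tr (L # Ls) = PML L # UL L # tr Ls"

lemma op_kinds: "is_unitary_op o' \<Longrightarrow> \<not> is_prep o' \<and> \<not> is_meas o'" "is_prep o' \<Longrightarrow> \<not> is_meas o'"
  by (cases o'; simp)+

lemma distinct_concat_disj:
  "distinct (concat (map f xs)) \<Longrightarrow> a \<in> set xs \<Longrightarrow> b \<in> set xs \<Longrightarrow> a \<noteq> b \<Longrightarrow> set (f a) \<inter> set (f b) = {}"
  by (induction xs) auto

lemma distinct_concat_elem:
  "distinct (concat (map f xs)) \<Longrightarrow> a \<in> set xs \<Longrightarrow> distinct (f a)"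
  by (induction xs) auto

lemma distinct_concat_filter:
  "distinct (concat (map f xs)) \<Longrightarrow> distinct (concat (map f (filter P xs)))"
  by (induction xs) auto

lemma wf_op_qubits: "wf_op n o' \<Longrightarrow> \<forall>q\<in>set (op_qubits o'). q < n"
  by (cases o') auto

lemma layer_sem_PML:
  "layer_sem n (PML L) \<sigma> = fold (apply_op n) (filter is_meas L) (fold (apply_op n) (filter is_prep L) \<sigma>)"
proof -
  have a: "filter is_unitary_op (PML L) = []"
    unfolding PML_def by (auto simp: filter_empty_conv dest: op_kinds)
  have b: "filter is_prep (PML L) = filter is_prep L"
    unfolding PML_def by (auto simp: filter_filter intro: filter_cong)
  have c: "filter is_meas (PML L) = filter is_meas L"
    unfolding PML_def by (auto simp: filter_filter intro: filter_cong)
  show ?thesis unfolding layer_sem_def a b c by simp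
qed

lemma layer_sem_UL:
  "layer_sem n (UL L) \<sigma> = fold (apply_op n) (UL L) \<sigma>"
proof -
  have a: "filter is_unitary_op (UL L) = UL L"
    unfolding UL_def by (auto simp: filter_id_conv)
  have b: "filter is_prep (UL L) = []"
    unfolding UL_def by (auto simp: filter_empty_conv dest: op_kinds)
  have c: "filter is_meas (UL L) = []"
    unfolding UL_def by (auto simp: filter_empty_conv dest: op_kinds)
  show ?thesis unfolding layer_sem_def a b c by simp
qed

lemma layer_sem_L:
  "layer_sem n L \<sigma> = fold (apply_op n) (filter is_meas L) (fold (apply_op n) (filter is_prep L) (fold (apply_op n) (filter is_unitary_op L) \<sigma>))"
  unfolding layer_sem_def by simp

lemma wf_layer_n0: "wf_layer 0 L \<Longrightarrow> L = []"
proof (cases L)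
  case (Cons o' L')
  assume "wf_layer 0 L"
  then have "wf_op 0 o'" using Cons by (simp add: wf_layer_def)
  then show ?thesis by (cases o') auto
qed simp

lemma layer_eq:
  assumes wf: "wf_layer n L"
    and g: "\<forall>j<n. g (t, j) = pm (f (Suc (2*t), j)) (fold propg (filter is_unitary_op L) (\<lambda>i. f (2*t, i)) j)"
  shows "noise_layer n f (Suc (2*t)) (layer_sem n (UL L) (noise_layer n f (2*t) (layer_sem n (PML L) \<sigma>)))
       = noise_layer n g t (layer_sem n L \<sigma>)"
proof (cases "n = 0")
  case True
  then have "L = []" using wf wf_layer_n0 by simp
  then show ?thesis using True by (simp add: noise_layer_def layer_sem_def PML_def UL_def)
next
  case False
  then have n: "0 < n" by simp
  let ?Us = "filter is_unitary_op L"
  let ?Ps = "filter is_prep L"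
  let ?Ms = "filter is_meas L"
  let ?e0 = "\<lambda>i. f (2*t, i)"
  let ?e1 = "\<lambda>i. f (Suc (2*t), i)"
  have dL: "distinct (concat (map op_qubits L))" and wL: "\<forall>o'\<in>set L. wf_op n o'"
    using wf by (auto simp: wf_layer_def)
  have Us: "\<forall>u\<in>set ?Us. is_unitary_op u \<and> distinct (op_qubits u) \<and> (\<forall>q\<in>set (op_qubits u). q < n)"
    using dL wL distinct_concat_elem[OF dL] wf_op_qubits by auto
  have disj: "set (op_qubits p) \<inter> set (op_qubits u) = {}" if "u \<in> set ?Us" "p \<in> set L" "\<not> is_unitary_op p" for u p
  proof -
    have "p \<noteq> u" using that by auto
    then show ?thesis using distinct_concat_disj[OF dL] that by auto
  qed
  have Ps: "\<forall>u\<in>set ?Us. \<forall>p\<in>set ?Ps. is_prep p \<and> wf_op n p \<and> set (op_qubits p) \<inter> set (op_qubits u) = {}"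
    using wL disj op_kinds by auto
  have Ms: "\<forall>u\<in>set ?Us. \<forall>p\<in>set ?Ms. is_meas p \<and> wf_op n p \<and> set (op_qubits p) \<inter> set (op_qubits u) = {}"
  proof (intro ballI conjI)
    fix u p assume "u \<in> set ?Us" "p \<in> set ?Ms"
    moreover have "\<not> is_unitary_op p" using \<open>p \<in> set ?Ms\<close> op_kinds by auto
    ultimately show "set (op_qubits p) \<inter> set (op_qubits u) = {}" using disj by auto
  qed (use wL in auto)
  have ULw: "\<forall>u\<in>set (UL L). is_unitary_op u \<and> wf_op n u \<and> distinct (op_qubits u)"
    unfolding UL_def using wL distinct_concat_elem[OF dL] by auto
  have fp: "fold propg (UL L) e = fold propg ?Us e" for e
  proof -
    have "propg \<circ> modc (length ?Ms) = propg" by (rule ext) simp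
    then show ?thesis unfolding UL_def by (simp add: fold_map)
  qed
  have "noise_layer n f (Suc (2*t)) (layer_sem n (UL L) (noise_layer n f (2*t) (layer_sem n (PML L) \<sigma>)))
      = apply_unitary n (PS n ?e1) (fold (apply_op n) (UL L)
           (apply_unitary n (PS n ?e0) (fold (apply_op n) ?Ms (fold (apply_op n) ?Ps \<sigma>))))"
    by (simp add: noise_PS[OF n] layer_sem_PML layer_sem_UL)
  also have "\<dots> = apply_unitary n (PS n ?e1) (apply_unitary n (PS n (fold propg (UL L) ?e0))
           (fold (apply_op n) (UL L) (fold (apply_op n) ?Ms (fold (apply_op n) ?Ps \<sigma>))))"
    by (simp add: fold_push[OF ULw])
  also have "fold (apply_op n) (UL L) (fold (apply_op n) ?Ms (fold (apply_op n) ?Ps \<sigma>))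
      = fold (apply_op n) ?Ms (fold (apply_op n) ?Ps (fold (apply_op n) ?Us \<sigma>))"
    unfolding UL_def by (rule layer_reorder[OF Us Ps Ms])
  also have "fold (apply_op n) ?Ms (fold (apply_op n) ?Ps (fold (apply_op n) ?Us \<sigma>)) = layer_sem n L \<sigma>"
    by (simp add: layer_sem_L)
  also have "apply_unitary n (PS n ?e1) (apply_unitary n (PS n (fold propg (UL L) ?e0)) (layer_sem n L \<sigma>))
      = apply_unitary n (PS n (\<lambda>i. pm (?e1 i) (fold propg (UL L) ?e0 i))) (layer_sem n L \<sigma>)"
    by (rule PS_PS)
  also have "PS n (\<lambda>i. pm (?e1 i) (fold propg (UL L) ?e0 i)) = PS n (\<lambda>j. g (t, j))"
    using g by (intro PS_cong) (simp add: fp)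
  also have "apply_unitary n (PS n (\<lambda>j. g (t, j))) (layer_sem n L \<sigma>) = noise_layer n g t (layer_sem n L \<sigma>)"
    by (simp add: noise_PS[OF n])
  finally show ?thesis .
qed

definition gC :: "circuit \<Rightarrow> noise \<Rightarrow> noise" where
  "gC C f = (\<lambda>(t, j). if t < length C then pm (f (Suc (2*t), j)) (fold propg (filter is_unitary_op (C ! t)) (\<lambda>i. f (2*t, i)) j) else PI)"

lemma run_eq:
  assumes C: "clifford_circuit n C"
  shows "k \<le> length C \<Longrightarrow> run n (tr (drop k C)) f (2*k) \<sigma> = run n (drop k C) (gC C f) k \<sigma>"
proof (induction "length C - k" arbitrary: k \<sigma>)
  case 0
  then show ?case by simp
next
  case (Suc m)
  then have k: "k < length C" by simp
  have dk: "drop k C = C ! k # drop (Suc k) C" using k by (simp add: Cons_nth_drop_Suc)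
  have wf: "wf_layer n (C ! k)" using C k by (simp add: clifford_circuit_def)
  have g: "\<forall>j<n. gC C f (k, j) = pm (f (Suc (2*k), j)) (fold propg (filter is_unitary_op (C ! k)) (\<lambda>i. f (2*k, i)) j)"
    using k by (simp add: gC_def)
  have IH: "run n (tr (drop (Suc k) C)) f (2 * Suc k) \<tau> = run n (drop (Suc k) C) (gC C f) (Suc k) \<tau>" for \<tau>
    using Suc k by (metis Suc_diff_Suc Suc_leI nat.inject)
  have "run n (tr (drop k C)) f (2*k) \<sigma> = run n (tr (drop (Suc k) C)) f (Suc (Suc (2*k)))
     (noise_layer n f (Suc (2*k)) (layer_sem n (UL (C ! k)) (noise_layer n f (2*k) (layer_sem n (PML (C ! k)) \<sigma>))))"
    unfolding dk by simp
  also have "\<dots> = run n (tr (drop (Suc k) C)) f (2 * Suc k) (noise_layer n (gC C f) k (layer_sem n (C ! k) \<sigma>))"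
    using layer_eq[OF wf g] by simp
  also have "\<dots> = run n (drop k C) (gC C f) k \<sigma>"
    unfolding IH dk by simp
  finally show ?case .
qed

lemma noisy_eq:
  assumes "clifford_circuit n C"
  shows "noisy_sem n (tr C) f \<rho> = noisy_sem n C (gC C f) \<rho>"
  using run_eq[OF assms, of 0 f] by (simp add: noisy_sem_def)

lemma tr_length: "length (tr C) = 2 * length C"
  by (induction C) auto

lemma tr_nth: "t < 2 * length C \<Longrightarrow> tr C ! t = (if even t then PML (C ! (t div 2)) else UL (C ! (t div 2)))"
proof (induction C arbitrary: t)
  case (Cons L Ls)
  show ?case
  proof (cases t)
    case (Suc t1)
    show ?thesis
    proof (cases t1)
      case (Suc t2)
      then have "t2 < 2 * length Ls" using Cons.prems \<open>t = Suc t1\<close> by simp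
      then show ?thesis using Cons.IH[of t2] \<open>t = Suc t1\<close> Suc by simp
    qed (use \<open>t = Suc t1\<close> in simp)
  qed simp
qed simp

lemma wf_PML: "wf_layer n L \<Longrightarrow> wf_layer n (PML L)"
  unfolding wf_layer_def PML_def by (auto intro: distinct_concat_filter)

lemma wf_UL: "wf_layer n L \<Longrightarrow> wf_layer n (UL L)"
proof -
  assume "wf_layer n L"
  moreover have "concat (map op_qubits (UL L)) = concat (map op_qubits (filter is_unitary_op L))"
    unfolding UL_def by (simp add: comp_def)
  ultimately show ?thesis unfolding wf_layer_def by (auto intro: distinct_concat_filter simp: UL_def)
qed

lemma tr_wf: "clifford_circuit n C \<Longrightarrow> clifford_circuit n (tr C)"
  by (induction C) (auto simp: clifford_circuit_def wf_PML wf_UL)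

lemma prep_meas_PML: "prep_meas_layer (PML L)"
proof -
  have "prep_meas_id_op o'" if "is_prep o' \<or> is_meas o'" for o' using that by (cases o') auto
  then show ?thesis unfolding prep_meas_layer_def PML_def by auto
qed

lemma unitary_UL: "unitary_layer (UL L)"
  unfolding unitary_layer_def UL_def by auto


lemma union_bound_ls:
  fixes Ft :: "noise pmf" and S :: "nat \<times> nat \<Rightarrow> (nat \<times> nat) set"
  assumes W: "finite W"
    and Sw: "\<forall>w\<in>W. finite (S w) \<and> card (S w) \<le> 3 \<and> S w \<subseteq> {..<D'} \<times> {..<n}"
    and fib: "\<forall>v. card {w\<in>W. v \<in> S w} \<le> 2"
    and ls: "local_stochastic D' n pt Ft" and pt: "0 \<le> pt" "pt \<le> 1"
    and cover: "\<forall>f\<in>A. \<forall>w\<in>W. \<exists>v\<in>S w. f v \<noteq> PI"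
  shows "measure_pmf.prob Ft A \<le> (3 * sqrt pt) ^ card W"
proof -
  let ?P = "PiE W S"
  have finP: "finite ?P" using W Sw by (intro finite_PiE) auto
  have sub: "A \<subseteq> (\<Union>\<phi>\<in>?P. {f. \<phi> ` W \<subseteq> supp f})"
  proof
    fix f assume f: "f \<in> A"
    define \<phi> where "\<phi> = (\<lambda>w\<in>W. SOME v. v \<in> S w \<and> f v \<noteq> PI)"
    have "\<phi> w \<in> S w \<and> f (\<phi> w) \<noteq> PI" if "w \<in> W" for w
    proof -
      have "\<exists>v. v \<in> S w \<and> f v \<noteq> PI" using cover f that by blast
      then have "(SOME v. v \<in> S w \<and> f v \<noteq> PI) \<in> S w \<and> f (SOME v. v \<in> S w \<and> f v \<noteq> PI) \<noteq> PI"
        by (rule someI_ex)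
      then show ?thesis unfolding \<phi>_def using that by simp
    qed
    then have "\<phi> \<in> ?P" "\<phi> ` W \<subseteq> supp f" unfolding \<phi>_def supp_def by (auto simp: PiE_iff)
    then show "f \<in> (\<Union>\<phi>\<in>?P. {f. \<phi> ` W \<subseteq> supp f})" by blast
  qed
  have each: "measure_pmf.prob Ft {f. \<phi> ` W \<subseteq> supp f} \<le> sqrt pt ^ card W" if phi: "\<phi> \<in> ?P" for \<phi>
  proof -
    have im: "\<phi> ` W \<subseteq> {..<D'} \<times> {..<n}"
    proof
      fix v assume "v \<in> \<phi> ` W"
      then obtain w where "w \<in> W" "v = \<phi> w" by blast
      then have "v \<in> S w" using phi by (auto simp: PiE_iff)
      then show "v \<in> {..<D'} \<times> {..<n}" using Sw \<open>w \<in> W\<close> by blast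
    qed
    have "card W \<le> 2 * card (\<phi> ` W)"
    proof -
      have "W \<subseteq> (\<Union>v\<in>\<phi> ` W. {w\<in>W. v \<in> S w})" using phi by (auto simp: PiE_iff)
      then have "card W \<le> card (\<Union>v\<in>\<phi> ` W. {w\<in>W. v \<in> S w})"
        using W by (intro card_mono) auto
      also have "\<dots> \<le> (\<Sum>v\<in>\<phi> ` W. card {w\<in>W. v \<in> S w})"
        using W by (intro card_UN_le) simp
      also have "\<dots> \<le> (\<Sum>v\<in>\<phi> ` W. 2)" using fib by (intro sum_mono) auto
      also have "\<dots> = 2 * card (\<phi> ` W)" by simp
      finally show ?thesis .
    qed
    have "measure_pmf.prob Ft {f. \<phi> ` W \<subseteq> supp f} \<le> pt ^ card (\<phi> ` W)"
      using ls im unfolding local_stochastic_def by blast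
    also have "pt ^ card (\<phi> ` W) = sqrt pt ^ (2 * card (\<phi> ` W))"
      using pt by (simp add: power_mult real_sqrt_pow2)
    also have "\<dots> \<le> sqrt pt ^ card W"
      using pt \<open>card W \<le> 2 * card (\<phi> ` W)\<close> by (intro power_decreasing) auto
    finally show ?thesis .
  qed
  have "measure_pmf.prob Ft A \<le> measure_pmf.prob Ft (\<Union>\<phi>\<in>?P. {f. \<phi> ` W \<subseteq> supp f})"
    using sub by (intro measure_pmf.finite_measure_mono) auto
  also have "\<dots> \<le> (\<Sum>\<phi>\<in>?P. measure_pmf.prob Ft {f. \<phi> ` W \<subseteq> supp f})"
    using finP by (intro measure_pmf.finite_measure_subadditive_finite) auto
  also have "\<dots> \<le> real (card ?P) * sqrt pt ^ card W"
    using each by (intro sum_bounded_above) auto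
  also have "real (card ?P) \<le> 3 ^ card W"
  proof -
    have "card ?P = (\<Prod>w\<in>W. card (S w))" using W by (rule card_PiE)
    also have "\<dots> \<le> (\<Prod>w\<in>W. 3)" using Sw by (intro prod_mono) auto
    finally show ?thesis by (simp add: of_nat_le_iff[symmetric])
  qed
  then have "real (card ?P) * sqrt pt ^ card W \<le> 3 ^ card W * sqrt pt ^ card W"
    using pt by (intro mult_right_mono) auto
  also have "\<dots> = (3 * sqrt pt) ^ card W" by (simp add: power_mult_distrib)
  finally show ?thesis by simp
qed


lemma propg_supp:
  assumes "propg u e k \<noteq> PI"
  shows "\<exists>k'. (k' = k \<or> (k \<in> set (op_qubits u) \<and> k' \<in> set (op_qubits u))) \<and> e k' \<noteq> PI"
proof (cases u)
  case (Gate qs U)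
  show ?thesis
  proof (cases "k \<in> set qs")
    case True
    show ?thesis
    proof (rule ccontr)
      assume "\<not> ?thesis"
      then have allI: "\<forall>k'\<in>set qs. e k' = PI" using True Gate by auto
      then have "\<forall>p\<in>set (map e qs). p = PI" by auto
      then have "cimg U (map e qs) = map e qs" by (simp add: cimg_def)
      then have "propg u e k = e (qs ! idx qs k)" using Gate True idx_lt[OF True] by simp
      also have "\<dots> = PI" using allI True by (simp add: nth_idx)
      finally show False using assms by simp
    qed
  next
    case False
    then show ?thesis using assms Gate by auto
  qed
qed (use assms in auto)

lemma fold_supp:
  "distinct (concat (map op_qubits us)) \<Longrightarrow> fold propg us e j \<noteq> PI \<Longrightarrow>
   \<exists>k. (k = j \<or> (\<exists>o'\<in>set us. j \<in> set (op_qubits o') \<and> k \<in> set (op_qubits o'))) \<and> e k \<noteq> PI"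
proof (induction us arbitrary: e)
  case (Cons u us)
  have d: "distinct (concat (map op_qubits us))" using Cons.prems by simp
  have dj: "set (op_qubits u) \<inter> set (concat (map op_qubits us)) = {}" using Cons.prems by simp
  have f1: "fold propg us (propg u e) j \<noteq> PI" using Cons.prems(2) by simp
  obtain k where k: "k = j \<or> (\<exists>o'\<in>set us. j \<in> set (op_qubits o') \<and> k \<in> set (op_qubits o'))"
    and pk: "propg u e k \<noteq> PI"
    using Cons.IH[OF d f1] by blast
  obtain k' where k': "k' = k \<or> (k \<in> set (op_qubits u) \<and> k' \<in> set (op_qubits u))" and ek: "e k' \<noteq> PI"
    using propg_supp[OF pk] by blast
  have "k' = j \<or> (\<exists>o'\<in>set (u # us). j \<in> set (op_qubits o') \<and> k' \<in> set (op_qubits o'))"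
  proof -
    consider "k = j" | o' where "o' \<in> set us" "j \<in> set (op_qubits o')" "k \<in> set (op_qubits o')" using k by blast
    then show ?thesis
    proof cases
      case 1
      then show ?thesis using k' by auto
    next
      case 2
      then have "k \<notin> set (op_qubits u)" using dj by auto
      then have "k' = k" using k' by blast
      then show ?thesis using 2 by auto
    qed
  qed
  then show ?case using ek by blast
qed simp

definition nb :: "layer \<Rightarrow> nat \<Rightarrow> nat set" where
  "nb L j = {k. k = j \<or> (\<exists>o'\<in>set L. j \<in> set (op_qubits o') \<and> k \<in> set (op_qubits o'))}"

lemma nb_sym: "k \<in> nb L j \<longleftrightarrow> j \<in> nb L k"
  unfolding nb_def by blast

lemma wf_op_len: "wf_op n o' \<Longrightarrow> length (op_qubits o') \<le> 2"
  by (cases o') auto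

lemma nb_card:
  assumes wf: "wf_layer n L"
  shows "finite (nb L j) \<and> card (nb L j) \<le> 2"
proof (cases "\<exists>o'\<in>set L. j \<in> set (op_qubits o')")
  case True
  then obtain o' where o': "o' \<in> set L" "j \<in> set (op_qubits o')" by blast
  have dL: "distinct (concat (map op_qubits L))" using wf by (simp add: wf_layer_def)
  have "nb L j \<subseteq> set (op_qubits o')"
  proof
    fix k assume "k \<in> nb L j"
    then consider "k = j" | o2 where "o2 \<in> set L" "j \<in> set (op_qubits o2)" "k \<in> set (op_qubits o2)"
      unfolding nb_def by blast
    then show "k \<in> set (op_qubits o')"
    proof cases
      case 1 then show ?thesis using o' by simp
    next
      case 2
      then have "o2 = o'" using distinct_concat_disj[OF dL, of o2 o'] o' by blast
      then show ?thesis using 2 by simp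
    qed
  qed
  moreover have "card (set (op_qubits o')) \<le> 2"
    using wf o' wf_op_len[of n o'] card_length[of "op_qubits o'"] by (auto simp: wf_layer_def)
  ultimately show ?thesis by (meson List.finite_set card_mono finite_subset le_trans)
next
  case False
  then have "nb L j = {j}" unfolding nb_def by blast
  then show ?thesis by simp
qed

lemma nb_bound:
  assumes "wf_layer n L" "j < n"
  shows "nb L j \<subseteq> {..<n}"
proof
  fix k assume "k \<in> nb L j"
  then consider "k = j" | o' where "o' \<in> set L" "k \<in> set (op_qubits o')" unfolding nb_def by blast
  then show "k \<in> {..<n}"
  proof cases
    case 2
    then have "wf_op n o'" using assms by (simp add: wf_layer_def)
    then show ?thesis using wf_op_qubits 2 by auto
  qed (use assms in simp)
qed

definition SC :: "circuit \<Rightarrow> nat \<times> nat \<Rightarrow> (nat \<times> nat) set" where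
  "SC C w = insert (Suc (2 * fst w), snd w) ((\<lambda>k. (2 * fst w, k)) ` nb (C ! fst w) (snd w))"

lemma gC_supp:
  assumes t: "t < length C" and g: "gC C f (t, j) \<noteq> PI" and wf: "wf_layer n (C ! t)"
  shows "\<exists>v\<in>SC C (t, j). f v \<noteq> PI"
proof (cases "f (Suc (2*t), j) = PI")
  case True
  then have "fold propg (filter is_unitary_op (C ! t)) (\<lambda>i. f (2*t, i)) j \<noteq> PI"
    using g t by (simp add: gC_def)
  moreover have "distinct (concat (map op_qubits (filter is_unitary_op (C ! t))))"
    using wf by (simp add: wf_layer_def distinct_concat_filter)
  ultimately obtain k where k: "k = j \<or> (\<exists>o'\<in>set (filter is_unitary_op (C ! t)). j \<in> set (op_qubits o') \<and> k \<in> set (op_qubits o'))"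
    and fk: "f (2*t, k) \<noteq> PI"
    using fold_supp by blast
  have "k \<in> nb (C ! t) j" using k unfolding nb_def by auto
  then have "(2*t, k) \<in> SC C (t, j)" unfolding SC_def by auto
  then show ?thesis using fk by blast
next
  case False
  then show ?thesis unfolding SC_def by auto
qed

lemma SC_props:
  assumes C: "clifford_circuit n C" and w: "w \<in> {..<length C} \<times> {..<n}"
  shows "finite (SC C w) \<and> card (SC C w) \<le> 3 \<and> SC C w \<subseteq> {..<2 * length C} \<times> {..<n}"
proof -
  obtain t j where tj: "w = (t, j)" "t < length C" "j < n" using w by auto
  have wf: "wf_layer n (C ! t)" using C tj by (simp add: clifford_circuit_def)
  have nbc: "finite (nb (C ! t) j) \<and> card (nb (C ! t) j) \<le> 2" by (rule nb_card[OF wf])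
  have fin: "finite (SC C w)" using nbc tj unfolding SC_def by simp
  have "card (SC C w) \<le> Suc (card ((\<lambda>k. (2 * t, k)) ` nb (C ! t) j))"
    unfolding SC_def tj by (simp add: card_insert_le_m1 card_insert_if)
  also have "card ((\<lambda>k. (2 * t, k)) ` nb (C ! t) j) \<le> 2"
    using nbc card_image_le[of "nb (C ! t) j" "\<lambda>k. (2 * t, k)"] by simp
  finally have c3: "card (SC C w) \<le> 3" by simp
  have "SC C w \<subseteq> {..<2 * length C} \<times> {..<n}"
    using nb_bound[OF wf tj(3)] tj unfolding SC_def by auto
  then show ?thesis using fin c3 by simp
qed

lemma SC_fib:
  assumes C: "clifford_circuit n C" and W: "W \<subseteq> {..<length C} \<times> {..<n}" "finite W"
  shows "card {w\<in>W. v \<in> SC C w} \<le> 2"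
proof -
  obtain a k where v: "v = (a, k)" by (cases v)
  let ?t = "a div 2"
  show ?thesis
  proof (cases "even a")
    case False
    have "{w\<in>W. v \<in> SC C w} \<subseteq> {(?t, k)}"
    proof
      fix w assume "w \<in> {w\<in>W. v \<in> SC C w}"
      then have "v \<in> SC C w" by simp
      then show "w \<in> {(?t, k)}" using False v unfolding SC_def by (cases w) auto
    qed
    then have "card {w\<in>W. v \<in> SC C w} \<le> card {(?t, k)}" by (intro card_mono) auto
    then show ?thesis by simp
  next
    case True
    show ?thesis
    proof (cases "?t < length C")
      case tl: True
      have wf: "wf_layer n (C ! ?t)" using C tl by (simp add: clifford_circuit_def)
      have "{w\<in>W. v \<in> SC C w} \<subseteq> Pair ?t ` nb (C ! ?t) k"
      proof
        fix w assume "w \<in> {w\<in>W. v \<in> SC C w}"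
        then have "v \<in> SC C w" by simp
        then have "fst w = ?t \<and> k \<in> nb (C ! fst w) (snd w)" using True v unfolding SC_def by auto
        then show "w \<in> Pair ?t ` nb (C ! ?t) k" using nb_sym by (cases w) auto
      qed
      then have "card {w\<in>W. v \<in> SC C w} \<le> card (Pair ?t ` nb (C ! ?t) k)"
        using nb_card[OF wf, of k] by (intro card_mono) auto
      also have "\<dots> \<le> card (nb (C ! ?t) k)" by (rule card_image_le) (use nb_card[OF wf, of k] in simp)
      also have "\<dots> \<le> 2" using nb_card[OF wf, of k] by simp
      finally show ?thesis .
    next
      case False
      have E: "{w\<in>W. v \<in> SC C w} = {}"
      proof (rule ccontr)
        assume "{w\<in>W. v \<in> SC C w} \<noteq> {}"
        then obtain w where "w \<in> W" "v \<in> SC C w" by blast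
        then have "fst w = ?t" "fst w < length C" using True v W unfolding SC_def by auto
        then show False using False by simp
      qed
      show ?thesis unfolding E by simp
    qed
  qed
qed


theorem lemma5p2p6:
  fixes n :: nat and C :: circuit
  assumes "clifford_circuit n C"
  shows "\<exists>Ct. clifford_circuit n Ct \<and> length Ct = 2 * length C \<and>
           (\<forall>t < length Ct. (even t \<longrightarrow> prep_meas_layer (Ct ! t)) \<and>
                            (odd t \<longrightarrow> unitary_layer (Ct ! t))) \<and>
           simulates n Ct C"
proof (intro exI conjI allI impI)
  note C = assms
  show "clifford_circuit n (tr C)" by (rule tr_wf[OF C])
  show "length (tr C) = 2 * length C" by (rule tr_length)
  show "prep_meas_layer (tr C ! t)" if "t < length (tr C)" "even t" for t
    using that by (simp add: tr_length tr_nth prep_meas_PML)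
  show "unitary_layer (tr C ! t)" if "t < length (tr C)" "odd t" for t
    using that by (simp add: tr_length tr_nth unitary_UL)
  show "simulates n (tr C) C"
    unfolding simulates_def
  proof (rule exI[of _ 3], rule exI[of _ "1/2"], intro conjI allI impI)
    fix pt :: real and Ft
    assume pt: "0 \<le> pt \<and> pt \<le> 1" and ls: "local_stochastic (length (tr C)) n pt Ft"
    let ?F = "map_pmf (gC C) Ft"
    show "\<exists>F. local_stochastic (length C) n (3 * pt powr (1/2)) F \<and>
             map_pmf (noisy_sem n C) F = map_pmf (noisy_sem n (tr C)) Ft"
    proof (intro exI[of _ ?F] conjI)
      have "noisy_sem n C \<circ> gC C = noisy_sem n (tr C)"
        by (rule ext) (simp add: noisy_eq[OF C] fun_eq_iff)
      then show "map_pmf (noisy_sem n C) ?F = map_pmf (noisy_sem n (tr C)) Ft"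
        by (simp add: pmf.map_comp)
      show "local_stochastic (length C) n (3 * pt powr (1/2)) ?F"
        unfolding local_stochastic_def
      proof (intro allI impI)
        fix W assume W: "W \<subseteq> {..<length C} \<times> {..<n}"
        have fW: "finite W" using W finite_subset by blast
        have "measure_pmf.prob ?F {f. W \<subseteq> supp f} = measure_pmf.prob Ft {f. W \<subseteq> supp (gC C f)}"
          by simp
        also have "\<dots> \<le> (3 * sqrt pt) ^ card W"
        proof (rule union_bound_ls[OF fW _ _ ls])
          show "\<forall>w\<in>W. finite (SC C w) \<and> card (SC C w) \<le> 3 \<and> SC C w \<subseteq> {..<length (tr C)} \<times> {..<n}"
            using SC_props[OF C] W by (auto simp: tr_length)
          show "\<forall>v. card {w\<in>W. v \<in> SC C w} \<le> 2"
            using SC_fib[OF C W fW] by blast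
          show "0 \<le> pt" "pt \<le> 1" using pt by auto
          show "\<forall>f\<in>{f. W \<subseteq> supp (gC C f)}. \<forall>w\<in>W. \<exists>v\<in>SC C w. f v \<noteq> PI"
          proof (intro ballI)
            fix f w assume f: "f \<in> {f. W \<subseteq> supp (gC C f)}" and w: "w \<in> W"
            obtain t j where tj: "w = (t, j)" "t < length C" "j < n" using W w by auto
            have wf: "wf_layer n (C ! t)" using C tj by (simp add: clifford_circuit_def)
            have "gC C f (t, j) \<noteq> PI" using f w tj by (auto simp: supp_def)
            then show "\<exists>v\<in>SC C w. f v \<noteq> PI" using gC_supp[OF tj(2) _ wf] tj by simp
          qed
        qed
        also have "3 * sqrt pt = 3 * pt powr (1/2)" using pt by (simp add: powr_half_sqrt)
        finally show "measure_pmf.prob ?F {f. W \<subseteq> supp f} \<le> (3 * pt powr (1/2)) ^ card W" .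
      qed
    qed
  qed simp_all
qed

end
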